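(* Let $\alpha,\beta,\gamma>-1$ and $|\delta|<1$. For all integers $0\le k\le n$ and $0\le \ell\le m$, $$\int_{D_y}\int_{D_x}\mathcal{J}_{n,k}(x,y)\,\mathcal{J}_{m,\ell}(x,y)\,W(x,y)\,\mathrm{d}x\,\mathrm{d}y=H_{nk}\,\delta_{k\ell}\,\delta_{nm},$$ where $$W(x,y)=\theta(xy)\,|y|^{\beta+\gamma}(1+y)\Big(1+\frac{x}{y}\Big)\Big(\frac{x-\delta}{y}\Big)(1-y^2)^{\frac{\alpha-1}{2}}\Big(1-\frac{x^2}{y^2}\Big)^{\frac{\gamma-1}{2}}\Big(\frac{x^2-\delta^2}{y^2}\Big)^{\frac{\beta-1}{2}},$$ $\theta$ is the sign function, the integration domain is $D_x=[-|y|,-|\delta|]\cup[|\delta|,|y|]$ (for fixed $y$), $D_y=[-1,-|\delta|]\cup[|\delta|,1]$, and $$H_{nk}=\frac{(1-\delta^2)^{\frac{2k+\alpha+\beta+\gamma+3}{2}}}{1+(-1)^k\delta}\;h_k(\gamma,\beta)\;h_{n-k}(\alpha,2k+\gamma+\beta+1).$$ Here $$h_{n}(a,b)=\begin{cases}\dfrac{2\,\Gamma\big(\frac{n+b+1}{2}\big)\Gamma\big(\frac{n+a+3}{2}\big)\big(\frac n2\big)!}{(n+a+1)\,\Gamma\big(\frac{n+a+b+2}{2}\big)\big(\frac{a+1}{2}\big)_{n/2}^2}, & n\text{ even},\\[3mm] \dfrac{(n+a+b+1)\,\Gamma\big(\frac{n+b+2}{2}\big)\Gamma\big(\frac{n+a+2}{2}\big)\big(\frac{n-1}{2}\big)!}{2\,\Gamma\big(\frac{n+a+b+3}{2}\big)\big(\frac{a+1}{2}\big)_{(n+1)/2}^2},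 & n\text{ odd},\end{cases}$$ with $(a)_j$ the Pochhammer symbol.
   Context: For real $a,b$ and $c$ with $c^2\neq 1$, the (univariate) Big $-1$ Jacobi polynomials are $$J_{n}(x;a,b,c)=\begin{cases}{}_2F_1\!\left(\begin{smallmatrix}-\frac n2,\ \frac{n+a+b+2}{2}\\ \frac{a+1}{2}\end{smallmatrix};\frac{1-x^2}{1-c^2}\right)+\frac{n(1-x)}{(1+c)(a+1)}\,{}_2F_1\!\left(\begin{smallmatrix}1-\frac n2,\ \frac{n+a+b+2}{2}\\ \frac{a+3}{2}\end{smallmatrix};\frac{1-x^2}{1-c^2}\right), & n\text{ even},\\[2mm] {}_2F_1\!\left(\begin{smallmatrix}-\frac{n-1}2,\ \frac{n+a+b+1}{2}\\ \frac{a+1}{2}\end{smallmatrix};\frac{1-x^2}{1-c^2}\right)-\frac{(n+a+b+1)(1-x)}{(1+c)(a+1)}\,{}_2F_1\!\left(\begin{smallmatrix}-\frac{n-1}2,\ \frac{n+a+b+3}{2}\\ \frac{a+3}{2}\end{smallmatrix};\frac{1-x^2}{1-c^2}\right), & n\text{ odd},\end{cases}$$ where ${}_2F_1$ is the Gauss hypergeometric series (terminating here). Let $\rho_k(y)=y^k(1-\delta^2/y^2)^{k/2}$ if $k$ is even and $\rho_k(y)=y^k(1-\delta^2/y^2)^{(k-1)/2}(1+\delta/y)$ if $k$ is odd. The two-variable Big $-1$ Jacobi polynomials are, for $k=0,1,2,\dots$ and $n=k,k+1,\dots$, $$\mathcal{J}_{n,k}(x,y)=J_{n-k}\big(y;\alpha,2k+\beta+\gamma+1,(-1)^k\delta\big)\,\rho_k(y)\,J_k\Big(\frac{x}{y};\gamma,\beta,\frac{\delta}{y}\Big),$$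 a polynomial in $x,y$ (parameters $\alpha,\beta,\gamma$ real, $\delta\neq\pm1$). *)

theory Defs
  imports "HOL-Analysis.Analysis"
begin

text \<open>Gauss hypergeometric series 2F1(a,b;c;z) (used here only in terminating cases).\<close>
definition hyp2F1 :: "real \<Rightarrow> real \<Rightarrow> real \<Rightarrow> real \<Rightarrow> real" where
  "hyp2F1 a b c z =
     (\<Sum>j. pochhammer a j * pochhammer b j / (pochhammer c j * fact j) * z ^ j)"

definition bigJ :: "nat \<Rightarrow> real \<Rightarrow> real \<Rightarrow> real \<Rightarrow> real \<Rightarrow> real" where
  "bigJ n x a b c =
     (let z = (1 - x^2) / (1 - c^2) in
      if even n then
        hyp2F1 (- real n / 2) ((real n + a + b + 2) / 2) ((a + 1) / 2) z
        + real n * (1 - x) / ((1 + c) * (a + 1))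
          * hyp2F1 (1 - real n / 2) ((real n + a + b + 2) / 2) ((a + 3) / 2) z
      else
        hyp2F1 (- (real n - 1) / 2) ((real n + a + b + 1) / 2) ((a + 1) / 2) z
        - (real n + a + b + 1) * (1 - x) / ((1 + c) * (a + 1))
          * hyp2F1 (- (real n - 1) / 2) ((real n + a + b + 3) / 2) ((a + 3) / 2) z)"

definition rho :: "real \<Rightarrow> nat \<Rightarrow> real \<Rightarrow> real" where
  "rho \<delta> k y =
     (if even k then y ^ k * (1 - \<delta>^2 / y^2) ^ (k div 2)
      else y ^ k * (1 - \<delta>^2 / y^2) ^ ((k - 1) div 2) * (1 + \<delta> / y))"

definition bigJ2 :: "real \<Rightarrow> real \<Rightarrow> real \<Rightarrow> real \<Rightarrow> nat \<Rightarrow> nat \<Rightarrow> real \<Rightarrow> real \<Rightarrow> real" where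
  "bigJ2 \<alpha> \<beta> \<gamma> \<delta> n k x y =
     bigJ (n - k) y \<alpha> (2 * real k + \<beta> + \<gamma> + 1) ((-1) ^ k * \<delta>)
     * rho \<delta> k y * bigJ k (x / y) \<gamma> \<beta> (\<delta> / y)"

definition weightW :: "real \<Rightarrow> real \<Rightarrow> real \<Rightarrow> real \<Rightarrow> real \<Rightarrow> real \<Rightarrow> real" where
  "weightW \<alpha> \<beta> \<gamma> \<delta> x y =
     sgn (x * y) * \<bar>y\<bar> powr (\<beta> + \<gamma>) * (1 + y) * (1 + x / y) * ((x - \<delta>) / y)
     * (1 - y^2) powr ((\<alpha> - 1) / 2)
     * (1 - x^2 / y^2) powr ((\<gamma> - 1) / 2)
     * ((x^2 - \<delta>^2) / y^2) powr ((\<beta> - 1) / 2)"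

definition domX :: "real \<Rightarrow> real \<Rightarrow> real set" where
  "domX \<delta> y = {-\<bar>y\<bar>..-\<bar>\<delta>\<bar>} \<union> {\<bar>\<delta>\<bar>..\<bar>y\<bar>}"

definition domY :: "real \<Rightarrow> real set" where
  "domY \<delta> = {-1..-\<bar>\<delta>\<bar>} \<union> {\<bar>\<delta>\<bar>..1}"

definition hnorm :: "nat \<Rightarrow> real \<Rightarrow> real \<Rightarrow> real" where
  "hnorm n a b =
     (if even n then
        2 * Gamma ((real n + b + 1) / 2) * Gamma ((real n + a + 3) / 2) * fact (n div 2)
        / ((real n + a + 1) * Gamma ((real n + a + b + 2) / 2)
           * (pochhammer ((a + 1) / 2) (n div 2))^2)
      else
        (real n + a + b + 1) * Gamma ((real n + b + 2) / 2) * Gamma ((real n + a + 2) / 2)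
        * fact ((n - 1) div 2)
        / (2 * Gamma ((real n + a + b + 3) / 2)
           * (pochhammer ((a + 1) / 2) ((n + 1) div 2))^2))"

definition Hnorm :: "real \<Rightarrow> real \<Rightarrow> real \<Rightarrow> real \<Rightarrow> nat \<Rightarrow> nat \<Rightarrow> real" where
  "Hnorm \<alpha> \<beta> \<gamma> \<delta> n k =
     (1 - \<delta>^2) powr ((2 * real k + \<alpha> + \<beta> + \<gamma> + 3) / 2) / (1 + (-1) ^ k * \<delta>)
     * hnorm k \<gamma> \<beta> * hnorm (n - k) \<alpha> (2 * real k + \<gamma> + \<beta> + 1)"

end

theory Submission
  imports Defs "HOL-Computational_Algebra.Polynomial"
begin


definition wt :: "real \<Rightarrow> real \<Rightarrow> real \<Rightarrow> real" where
  "wt A B z = z powr (A-1) * (1-z) powr (B-1)"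

lemma wt_measurable[measurable]: "wt A B \<in> borel_measurable borel"
  unfolding wt_def by measurable

lemma beta_lborel:
  assumes "A>0" "B>0"
  shows "set_integrable lborel {0..1} (wt A B)" "(LINT z:{0..1}|lborel. wt A B z) = Beta A B"
proof -
  have hi: "(wt A B has_integral Beta A B) {0..1}" using has_integral_Beta_real[OF assms] unfolding wt_def .
  have "wt A B absolutely_integrable_on {0..1}"
    using hi by (intro nonnegative_absolutely_integrable_1) (auto simp: wt_def)
  hence "integrable lebesgue (\<lambda>x. indicator {0..1} x *\<^sub>R wt A B x)" by (simp add: set_integrable_def)
  moreover have "(\<lambda>x. indicator {0..1} x *\<^sub>R wt A B x) \<in> borel_measurable lborel" by measurable
  ultimately show si: "set_integrable lborel {0..1} (wt A B)"
    unfolding set_integrable_def using integrable_completion by blast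
  show "(LINT z:{0..1}|lborel. wt A B z) = Beta A B"
    using set_borel_integral_eq_integral(2)[OF si] hi by (simp add: integral_unique)
qed

lemma si_sum:
  fixes f :: "'i \<Rightarrow> 'a \<Rightarrow> real"
  assumes "finite I" "\<And>i. i\<in>I \<Longrightarrow> set_integrable M A (f i)"
  shows "set_integrable M A (\<lambda>x. \<Sum>i\<in>I. f i x) \<and> (LINT x:A|M. (\<Sum>i\<in>I. f i x)) = (\<Sum>i\<in>I. LINT x:A|M. f i x)"
  using assms
proof (induction I rule: finite_induct)
  case empty then show ?case by (simp add: set_integrable_def)
next
  case (insert i I)
  have a: "set_integrable M A (f i)" using insert by auto
  have b: "set_integrable M A (\<lambda>x. \<Sum>i\<in>I. f i x)" using insert by auto
  show ?case using insert set_integral_add[OF a b] by simp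
qed

lemma wt_shift1:
  assumes "z \<in> {0..1}"
  shows "z ^ r * wt A B z = wt (A + real r) B z"
proof (cases "z = 0")
  case True then show ?thesis by (cases r) (auto simp: wt_def)
next
  case False
  then have "z > 0" using assms by auto
  then have "z powr real r * z powr (A-1) = z powr (A + real r - 1)"
    by (subst powr_add[symmetric]) (simp add: algebra_simps)
  then show ?thesis unfolding wt_def using \<open>z>0\<close>
    by (simp add: powr_realpow[symmetric] mult.assoc[symmetric])
qed

lemma wt_shift2:
  assumes "z \<in> {0..1}"
  shows "(1-z) ^ q * wt A B z = wt A (B + real q) z"
proof (cases "z = 1")
  case True then show ?thesis by (cases q) (auto simp: wt_def)
next
  case False
  then have "1-z > 0" using assms by auto
  then have "(1-z) powr real q * (1-z) powr (B-1) = (1-z) powr (B + real q - 1)"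
    by (subst powr_add[symmetric]) (simp add: algebra_simps)
  then show ?thesis unfolding wt_def using \<open>1-z>0\<close>
    by (simp add: powr_realpow[symmetric] algebra_simps)
qed

definition Lf :: "real \<Rightarrow> real \<Rightarrow> real poly \<Rightarrow> real" where
  "Lf A B p = (LINT z:{0..1}|lborel. poly p z * wt A B z)"

lemma Lf_main:
  assumes "A>0" "B>0"
  shows "set_integrable lborel {0..1} (\<lambda>z. poly p z * wt A B z)"
    "Lf A B p = (\<Sum>s\<le>degree p. coeff p s * Beta (A + real s) B)"
proof -
  have eq: "poly p z * wt A B z = (\<Sum>s\<le>degree p. coeff p s * wt (A + real s) B z)" if "z\<in>{0..1}" for z
    unfolding poly_altdef sum_distrib_right using wt_shift1[OF that]
    by (intro sum.cong) (auto simp: mult.assoc)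
  have ii: "set_integrable lborel {0..1} (\<lambda>z. coeff p s * wt (A + real s) B z)" for s
    using beta_lborel(1)[of "A + real s" B] assms by auto
  note S = si_sum[of "{..degree p}" lborel "{0..1}" "\<lambda>s z. coeff p s * wt (A + real s) B z", OF _ ii]
  show "set_integrable lborel {0..1} (\<lambda>z. poly p z * wt A B z)"
    using S eq by (subst set_integrable_cong[OF refl refl eq]) auto
  have "Lf A B p = (LINT z:{0..1}|lborel. (\<Sum>s\<le>degree p. coeff p s * wt (A + real s) B z))"
    unfolding Lf_def by (rule set_lebesgue_integral_cong) (use eq in auto)
  also have "\<dots> = (\<Sum>s\<le>degree p. coeff p s * Beta (A + real s) B)"
    using S beta_lborel(2)[of "A + real _" B] assms by simp
  finally show "Lf A B p = (\<Sum>s\<le>degree p. coeff p s * Beta (A + real s) B)" .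
qed

lemma Lf_add: "A>0 \<Longrightarrow> B>0 \<Longrightarrow> Lf A B (p + q) = Lf A B p + Lf A B q"
  unfolding Lf_def using Lf_main(1)[of A B p] Lf_main(1)[of A B q]
  by (simp add: distrib_right)

lemma Lf_smult: "Lf A B (smult c p) = c * Lf A B p"
  unfolding Lf_def by (simp add: mult.assoc)

lemma Lf_zero[simp]: "Lf A B 0 = 0" by (simp add: Lf_def)

lemma Lf_sum:
  assumes "A>0" "B>0" "finite I"
  shows "Lf A B (\<Sum>i\<in>I. f i) = (\<Sum>i\<in>I. Lf A B (f i))"
  using assms(3) by (induction I rule: finite_induct) (auto simp: Lf_add[OF assms(1,2)] Lf_zero)

lemma Lf_monom:
  assumes "A>0" "B>0"
  shows "Lf A B (monom c r) = c * Beta (A + real r) B"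
proof -
  have "Lf A B (monom c r) = (LINT z:{0..1}|lborel. c * wt (A + real r) B z)"
    unfolding Lf_def by (rule set_lebesgue_integral_cong) (auto simp: poly_monom wt_shift1[symmetric] mult.assoc)
  also have "\<dots> = c * Beta (A + real r) B" using beta_lborel(2)[of "A + real r" B] assms by simp
  finally show ?thesis .
qed

lemma Lf_xpow: "Lf A B (monom 1 r * p) = Lf (A + real r) B p"
  unfolding Lf_def
  by (rule set_lebesgue_integral_cong) (auto simp: poly_monom wt_shift1[symmetric])

lemma Lf_1mx: "Lf A B ([:1,-1:] ^ q * p) = Lf A (B + real q) p"
  unfolding Lf_def
  by (rule set_lebesgue_integral_cong) (auto simp: wt_shift2[symmetric])



lemma pascal_diff:
  fixes f :: "nat \<Rightarrow> real"
  shows "(\<Sum>s\<le>Suc j. (-1)^s * real (Suc j choose s) * f s)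
       = (\<Sum>s\<le>j. (-1)^s * real (j choose s) * (f s - f (Suc s)))"
proof -
  have "(\<Sum>s\<le>Suc j. (-1)^s * real (Suc j choose s) * f s)
      = f 0 + (\<Sum>s\<le>j. (-1)^(Suc s) * real (Suc j choose Suc s) * f (Suc s))"
    by (subst sum.atMost_Suc_shift) simp
  also have "\<dots> = f 0 + (\<Sum>s\<le>j. (-1)^(Suc s) * real (j choose Suc s) * f (Suc s))
                 + (\<Sum>s\<le>j. (-1)^(Suc s) * real (j choose s) * f (Suc s))"
  proof -
    have "\<And>s. (-1)^(Suc s) * real (Suc j choose Suc s) * f (Suc s) = (-1)^(Suc s) * real (j choose Suc s) * f (Suc s) + (-1)^(Suc s) * real (j choose s) * f (Suc s)"
      by (simp add: algebra_simps)
    then show ?thesis by (simp only: sum.distrib add.assoc)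
  qed
  also have "f 0 + (\<Sum>s\<le>j. (-1)^(Suc s) * real (j choose Suc s) * f (Suc s))
            = (\<Sum>s\<le>Suc j. (-1)^s * real (j choose s) * f s)"
    by (subst sum.atMost_Suc_shift) simp
  also have "\<dots> = (\<Sum>s\<le>j. (-1)^s * real (j choose s) * f s)"
    by simp
  also have "(\<Sum>s\<le>j. (-1)^(Suc s) * real (j choose s) * f (Suc s)) = - (\<Sum>s\<le>j. (-1)^s * real (j choose s) * f (Suc s))"
    by (simp add: sum_negf[symmetric])
  also have "(\<Sum>s\<le>j. (-1)^s * real (j choose s) * f s) + - (\<Sum>s\<le>j. (-1)^s * real (j choose s) * f (Suc s))
     = (\<Sum>s\<le>j. (-1)^s * real (j choose s) * (f s - f (Suc s)))"
    by (simp add: sum_subtractf[symmetric] right_diff_distrib)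
  finally show ?thesis .
qed

lemma delta_poly_degree:
  fixes p :: "real poly"
  assumes "p - p \<circ>\<^sub>p [:1,1:] \<noteq> 0"
  shows "degree (p - p \<circ>\<^sub>p [:1,1:]) < degree p"
proof -
  let ?q = "p - p \<circ>\<^sub>p [:1,1:]"
  have dc: "degree (p \<circ>\<^sub>p [:1,1:]) = degree p" by (simp add: degree_pcompose)
  have le: "degree ?q \<le> degree p" using degree_diff_le_max[of p "p \<circ>\<^sub>p [:1,1:]"] dc by simp
  have lc: "lead_coeff (p \<circ>\<^sub>p [:1,1:]) = lead_coeff p" by (simp add: lead_coeff_comp)
  have c0: "coeff ?q (degree p) = 0" using lc dc by simp
  show ?thesis
  proof (rule ccontr)
    assume "\<not> ?thesis"
    then have "degree ?q = degree p" using le by simp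
    then have "lead_coeff ?q = 0" using c0 by metis
    then show False using assms by (simp only: leading_coeff_0_iff)
  qed
qed

lemma fin_diff_zero:
  fixes p :: "real poly"
  assumes "degree p < j \<or> p = 0"
  shows "(\<Sum>s\<le>j. (-1)^s * real (j choose s) * poly p (real s)) = 0"
  using assms
proof (induction j arbitrary: p)
  case 0 then show ?case by simp
next
  case (Suc j)
  let ?q = "p - p \<circ>\<^sub>p [:1,1:]"
  have pq: "\<And>s. poly p (real s) - poly p (real (Suc s)) = poly ?q (real s)"
    by (simp add: poly_pcompose add.commute)
  have "(\<Sum>s\<le>Suc j. (-1)^s * real (Suc j choose s) * poly p (real s))
      = (\<Sum>s\<le>j. (-1)^s * real (j choose s) * poly ?q (real s))"
    by (subst pascal_diff) (simp only: pq)
  also have "\<dots> = 0"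
  proof (cases "?q = 0")
    case True then show ?thesis by simp
  next
    case False
    then have "degree ?q < degree p" by (rule delta_poly_degree)
    moreover have "degree p \<le> j" using Suc.prems False by auto
    ultimately show ?thesis by (intro Suc.IH) simp
  qed
  finally show ?case .
qed

lemma recip_sum:
  fixes t :: real
  assumes "t > 0"
  shows "(\<Sum>s\<le>j. (-1)^s * real (j choose s) * (1 / (t + real s))) = fact j / pochhammer t (Suc j)"
  using assms
proof (induction j arbitrary: t)
  case 0 then show ?case by simp
next
  case (Suc j)
  have tp: "t + 1 > 0" using Suc.prems by simp
  have "(\<Sum>s\<le>Suc j. (-1)^s * real (Suc j choose s) * (1 / (t + real s)))
      = (\<Sum>s\<le>j. (-1)^s * real (j choose s) * (1 / (t + real s) - 1 / (t + 1 + real s)))"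
    by (subst pascal_diff) (simp add: add.assoc)
  also have "\<dots> = fact j / pochhammer t (Suc j) - fact j / pochhammer (t+1) (Suc j)"
    using Suc.IH[OF Suc.prems] Suc.IH[OF tp] by (simp add: sum_subtractf algebra_simps)
  also have "\<dots> = fact (Suc j) / pochhammer t (Suc (Suc j))"
  proof -
    have p1: "pochhammer t (Suc j) = t * pochhammer (t+1) j" by (simp add: pochhammer_rec)
    have p2: "pochhammer (t+1) (Suc j) = pochhammer (t+1) j * (t + 1 + real j)" by (subst pochhammer_Suc) (rule refl)
    have p3: "pochhammer t (Suc (Suc j)) = t * (pochhammer (t+1) j * (t + 1 + real j))"
      by (simp only: pochhammer_rec[of t "Suc j"] p2)
    have nz: "pochhammer (t+1) j \<noteq> 0" using tp by (auto simp add: pochhammer_eq_0_iff)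
    have t0: "t \<noteq> 0" and u0: "t + 1 + real j \<noteq> 0" using Suc.prems by auto
    have key: "\<And>F P u. t \<noteq> 0 \<Longrightarrow> u \<noteq> 0 \<Longrightarrow> P \<noteq> 0 \<Longrightarrow>
       F / (t * P) - F / (P * u) = (u - t) * F / (t * (P * u))"
      by (simp add: field_simps)
    have e: "t + 1 + real j - t = real j + 1" by simp
    show ?thesis unfolding p1 p2 p3 fact_Suc using key[OF t0 u0 nz, of "fact j"] unfolding e by (simp add: algebra_simps)
  qed
  finally show ?case .
qed



lemma Beta_shift:
  fixes A B :: real
  assumes "A > 0" "B > 0"
  shows "Beta (A + real n) B = Beta A B * pochhammer A n / pochhammer (A + B) n"
proof (induction n)
  case 0 then show ?case by simp
next
  case (Suc n)
  have pos: "A + real n > 0" using assms by simp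
  have nz: "A + real n \<notin> \<int>\<^sub>\<le>\<^sub>0" using pos by (auto elim!: nonpos_Ints_cases)
  have "(A + real n + B) * Beta (A + real n + 1) B = (A + real n) * Beta (A + real n) B"
    by (rule Beta_plus1_left[OF nz])
  moreover have d0: "A + real n + B \<noteq> 0" using assms by simp
  ultimately have e1: "Beta (A + real (Suc n)) B = (A + real n) * Beta (A + real n) B / (A + real n + B)"
    by (simp add: field_simps add_ac)
  have nz: "pochhammer (A+B) n \<noteq> 0" using assms by (simp add: pochhammer_pos less_imp_neq[symmetric])
  have e2: "A + B + real n = A + real n + B" by simp
  show ?case unfolding e1 Suc.IH pochhammer_Suc e2 using nz d0
    by (simp add: field_simps)
qed

definition fc :: "nat \<Rightarrow> real \<Rightarrow> real \<Rightarrow> nat \<Rightarrow> real" where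
  "fc j \<mu> \<nu> s = pochhammer (- real j) s * pochhammer (real j + \<mu> + \<nu> - 1) s / (pochhammer \<mu> s * fact s)"

definition Fp :: "nat \<Rightarrow> real \<Rightarrow> real \<Rightarrow> real poly" where
  "Fp j \<mu> \<nu> = (\<Sum>s\<le>j. monom (fc j \<mu> \<nu> s) s)"

lemma poch_neg_fact: "pochhammer (- real j) s / fact s = (-1)^s * real (j choose s)"
proof -
  have "real (j choose s) = (real j gchoose s)" by (simp add: binomial_gbinomial)
  also have "\<dots> = (-1)^s * pochhammer (- real j) s / fact s" by (simp add: gbinomial_pochhammer)
  finally have "(-1)^s * real (j choose s) = (-1)^s * (-1)^s * pochhammer (- real j) s / fact s" by simp
  also have "(-1)^s * (-1)^s = (1::real)" by (simp add: power_mult_distrib[symmetric])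
  finally show ?thesis by simp
qed

lemma fc_alt: "fc j \<mu> \<nu> s = (-1)^s * real (j choose s) * pochhammer (real j + \<mu> + \<nu> - 1) s / pochhammer \<mu> s"
  unfolding fc_def using poch_neg_fact[of j s] by (simp add: field_simps)

definition pp :: "real \<Rightarrow> nat \<Rightarrow> real poly" where
  "pp a n = (\<Prod>i<n. [:a + real i, 1:])"

lemma poly_pp: "poly (pp a n) x = pochhammer (a + x) n"
  unfolding pp_def poly_prod pochhammer_prod by (simp add: atLeast0LessThan algebra_simps)

lemma degree_pp: "degree (pp a n) = n"
  unfolding pp_def by (subst degree_prod_sum_eq) auto

lemma degree_Fp: "degree (Fp j \<mu> \<nu>) \<le> j"
  unfolding Fp_def by (intro degree_sum_le) (auto intro: order.trans[OF degree_monom_le])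

lemma Lf_Fp:
  assumes "A > 0" "B > 0"
  shows "Lf A B (Fp j \<mu> \<nu>) = (\<Sum>s\<le>j. fc j \<mu> \<nu> s * Beta (A + real s) B)"
  unfolding Fp_def using assms by (simp add: Lf_sum Lf_monom)

lemma poch_swap:
  fixes A :: real
  shows "pochhammer A s * pochhammer (A + real s) k = pochhammer A k * pochhammer (A + real k) s"
  using pochhammer_product'[of A s k] pochhammer_product'[of A k s] by (simp add: add.commute)

lemma ortho_monom:
  assumes mu: "\<mu> > 0" and nu: "\<nu> > 0" and rj: "r < j"
  shows "Lf \<mu> \<nu> (monom 1 r * Fp j \<mu> \<nu>) = 0"
proof -
  define A where "A = \<mu> + \<nu> + real r"
  define k where "k = j - 1 - r"
  define C where "C = Beta \<mu> \<nu> / (pochhammer (\<mu> + \<nu>) r * pochhammer A k)"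
  define P where "P = pp \<mu> r * pp A k"
  have Apos: "A > 0" using mu nu by (simp add: A_def)
  have jk: "A + real k = real j + \<mu> + \<nu> - 1" using rj by (simp add: A_def k_def of_nat_diff)
  have trm: "fc j \<mu> \<nu> s * Beta (\<mu> + real r + real s) \<nu> = C * ((-1)^s * real (j choose s) * poly P (real s))" for s
  proof -
    have b: "Beta (\<mu> + real (s + r)) \<nu> = Beta \<mu> \<nu> * pochhammer \<mu> (s + r) / pochhammer (\<mu> + \<nu>) (s + r)"
      by (rule Beta_shift[OF mu nu])
    have p1: "pochhammer \<mu> (s + r) = pochhammer \<mu> s * pochhammer (\<mu> + real s) r" by (rule pochhammer_product')
    have p2: "pochhammer (\<mu> + \<nu>) (s + r) = pochhammer (\<mu> + \<nu>) r * pochhammer A s"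
      using pochhammer_product'[of "\<mu>+\<nu>" r s] by (simp add: A_def add.commute)
    have p3: "pochhammer (real j + \<mu> + \<nu> - 1) s = pochhammer A s * pochhammer (A + real s) k / pochhammer A k"
    proof -
      have "pochhammer A k \<noteq> 0" using Apos by (simp add: pochhammer_pos less_imp_neq[symmetric])
      then show ?thesis using poch_swap[of A s k] jk by (simp add: field_simps)
    qed
    have nz1: "pochhammer \<mu> s \<noteq> 0" using mu by (simp add: pochhammer_pos less_imp_neq[symmetric])
    have nz2: "pochhammer A s \<noteq> 0" using Apos by (simp add: pochhammer_pos less_imp_neq[symmetric])
    have nz3: "pochhammer A k \<noteq> 0" using Apos by (simp add: pochhammer_pos less_imp_neq[symmetric])
    have nz4: "pochhammer (\<mu>+\<nu>) r \<noteq> 0" using mu nu by (simp add: pochhammer_pos less_imp_neq[symmetric])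
    have pP: "poly P (real s) = pochhammer (\<mu> + real s) r * pochhammer (A + real s) k"
      unfolding P_def by (simp add: poly_pp)
    have e: "\<mu> + real r + real s = \<mu> + real (s + r)" by simp
    show ?thesis unfolding e b p1 p2 fc_alt p3 pP C_def using nz1 nz2 nz3 nz4
      by (simp add: field_simps)
  qed
  have degP: "degree P < j"
  proof -
    have "pp \<mu> r \<noteq> 0" "pp A k \<noteq> 0" using degree_pp by (auto simp: pp_def)
    then have "degree P = r + k" unfolding P_def by (simp add: degree_mult_eq degree_pp)
    then show ?thesis using rj by (simp add: k_def)
  qed
  have "Lf \<mu> \<nu> (monom 1 r * Fp j \<mu> \<nu>) = Lf (\<mu> + real r) \<nu> (Fp j \<mu> \<nu>)" by (rule Lf_xpow)
  also have "\<dots> = (\<Sum>s\<le>j. fc j \<mu> \<nu> s * Beta (\<mu> + real r + real s) \<nu>)"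
    using mu nu by (simp add: Lf_Fp)
  also have "\<dots> = C * (\<Sum>s\<le>j. (-1)^s * real (j choose s) * poly P (real s))"
    by (simp add: trm sum_distrib_left)
  also have "\<dots> = 0" using fin_diff_zero[of P j] degP by simp
  finally show ?thesis .
qed

lemma onemx_moment:
  assumes mu: "\<mu> > 0" and nu: "\<nu> > 0" and j: "j \<ge> 1"
  shows "Lf \<mu> \<nu> ([:1,-1:]^j * Fp j \<mu> \<nu>) = Beta \<mu> (\<nu> + real j) * fact j / pochhammer (real j + \<mu> + \<nu>) j"
proof -
  define t where "t = real j + \<mu> + \<nu> - 1"
  have tpos: "t > 0" using mu nu j by (simp add: t_def)
  have nuj: "\<nu> + real j > 0" using nu by simp
  have trm: "fc j \<mu> \<nu> s * Beta (\<mu> + real s) (\<nu> + real j)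
      = Beta \<mu> (\<nu> + real j) * t * ((-1)^s * real (j choose s) * (1 / (t + real s)))" for s
  proof -
    have b: "Beta (\<mu> + real s) (\<nu> + real j) = Beta \<mu> (\<nu> + real j) * pochhammer \<mu> s / pochhammer (t + 1) s"
      using Beta_shift[OF mu nuj, of s] by (simp add: t_def algebra_simps)
    have pr: "pochhammer t s * (t + real s) = t * pochhammer (t+1) s"
      using pochhammer_Suc[of t s] pochhammer_rec[of t s] by simp
    have nz1: "pochhammer \<mu> s \<noteq> 0" using mu by (simp add: pochhammer_pos less_imp_neq[symmetric])
    have nz2: "pochhammer (t+1) s \<noteq> 0" using tpos by (simp add: pochhammer_pos less_imp_neq[symmetric])
    have nz3: "t + real s \<noteq> 0" using tpos by simp
    have e: "pochhammer t s = t * pochhammer (t+1) s / (t + real s)" using pr nz3 by (simp add: field_simps)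
    have key0: "\<And>P Q u X Bt. P \<noteq> 0 \<Longrightarrow> Q \<noteq> 0 \<Longrightarrow> u \<noteq> 0 \<Longrightarrow> X * (t * Q / u) / P * (Bt * P / Q)
       = Bt * t * (X * (1 / u))"
      by (simp add: field_simps)
    have key: "\<And>P Q. P \<noteq> 0 \<Longrightarrow> Q \<noteq> 0 \<Longrightarrow> (-1)^s * real (j choose s) * (t * Q / (t + real s)) / P * (Beta \<mu> (\<nu> + real j) * P / Q)
       = Beta \<mu> (\<nu> + real j) * t * ((-1)^s * real (j choose s) * (1 / (t + real s)))"
      using key0 nz3 by blast
    show ?thesis unfolding fc_alt b t_def[symmetric] e using key[OF nz1 nz2] by (simp only: mult.assoc)
  qed
  have "Lf \<mu> \<nu> ([:1,-1:]^j * Fp j \<mu> \<nu>) = Lf \<mu> (\<nu> + real j) (Fp j \<mu> \<nu>)" by (rule Lf_1mx)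
  also have "\<dots> = (\<Sum>s\<le>j. fc j \<mu> \<nu> s * Beta (\<mu> + real s) (\<nu> + real j))"
    using mu nuj by (simp add: Lf_Fp)
  also have "\<dots> = Beta \<mu> (\<nu> + real j) * t * (\<Sum>s\<le>j. (-1)^s * real (j choose s) * (1 / (t + real s)))"
    by (simp add: trm sum_distrib_left)
  also have "\<dots> = Beta \<mu> (\<nu> + real j) * t * (fact j / pochhammer t (Suc j))"
    using recip_sum[OF tpos] by simp
  also have "\<dots> = Beta \<mu> (\<nu> + real j) * fact j / pochhammer (real j + \<mu> + \<nu>) j"
  proof -
    have "pochhammer t (Suc j) = t * pochhammer (t+1) j" by (rule pochhammer_rec)
    moreover have "t + 1 = real j + \<mu> + \<nu>" by (simp add: t_def)
    moreover have "pochhammer (t+1) j \<noteq> 0" using tpos by (simp add: pochhammer_pos less_imp_neq[symmetric])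
    ultimately show ?thesis using tpos by (simp add: field_simps)
  qed
  finally show ?thesis .
qed

lemma ortho_lower:
  assumes mu: "\<mu> > 0" and nu: "\<nu> > 0" and p: "degree p < j \<or> p = 0"
  shows "Lf \<mu> \<nu> (p * Fp j \<mu> \<nu>) = 0"
proof (cases "p = 0")
  case True then show ?thesis by simp
next
  case False
  then have dp: "degree p < j" using p by simp
  have "p * Fp j \<mu> \<nu> = (\<Sum>r\<le>degree p. smult (coeff p r) (monom 1 r * Fp j \<mu> \<nu>))"
    by (subst (1) poly_as_sum_of_monoms[symmetric]) (simp add: sum_distrib_right smult_monom_mult)
  then have "Lf \<mu> \<nu> (p * Fp j \<mu> \<nu>) = (\<Sum>r\<le>degree p. coeff p r * Lf \<mu> \<nu> (monom 1 r * Fp j \<mu> \<nu>))"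
    using mu nu by (simp add: Lf_sum Lf_smult)
  also have "\<dots> = 0" using ortho_monom[OF mu nu] dp by (intro sum.neutral) auto
  finally show ?thesis .
qed

lemma top_coeff_zero:
  fixes q :: "real poly"
  assumes "degree q \<le> j" "coeff q j = 0"
  shows "degree q < j \<or> q = 0"
proof (rule ccontr)
  assume "\<not> ?thesis"
  then have "degree q = j" "q \<noteq> 0" using assms by auto
  then show False using assms(2) by (metis leading_coeff_0_iff)
qed

lemma Fp_split: "Fp j \<mu> \<nu> = monom (fc j \<mu> \<nu> j) j + (\<Sum>s<j. monom (fc j \<mu> \<nu> s) s)"
  unfolding Fp_def by (simp add: lessThan_Suc_atMost[symmetric])

lemma Fp_lower: "degree (\<Sum>s<j. monom (fc j \<mu> \<nu> s) s) < j \<or> (\<Sum>s<j. monom (fc j \<mu> \<nu> s) s) = 0"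
proof (cases j)
  case 0 then show ?thesis by simp
next
  case (Suc i)
  have "degree (\<Sum>s<j. monom (fc j \<mu> \<nu> s) s) \<le> i"
    by (intro degree_sum_le) (auto simp: Suc intro: order.trans[OF degree_monom_le])
  then show ?thesis using Suc by simp
qed

lemma onemx_split: "[:1,-1::real:]^j = monom ((-1)^j) j + ([:1,-1:]^j - monom ((-1)^j) j)"
  by (simp add: algebra_simps)

lemma onemx_lower:
  "degree ([:1,-1::real:]^j - monom ((-1)^j) j) < j \<or> [:1,-1::real:]^j - monom ((-1)^j) j = 0"
proof (rule top_coeff_zero)
  have d: "degree ([:1,-1::real:]^j) = j" by (simp add: degree_power_eq)
  show "degree ([:1,-1::real:]^j - monom ((-1)^j) j) \<le> j"
    using degree_diff_le_max[of "[:1,-1::real:]^j" "monom ((-1)^j) j"] d degree_monom_le[of "(-1::real)^j" j] by simp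
  have "coeff ([:1,-1::real:]^j) j = (-1)^j"
    using lead_coeff_power[of "[:1,-1::real:]" j] d by simp
  then show "coeff ([:1,-1::real:]^j - monom ((-1)^j) j) j = 0" by simp
qed

definition Nn :: "nat \<Rightarrow> real \<Rightarrow> real \<Rightarrow> real" where
  "Nn j \<mu> \<nu> = pochhammer (real j + \<mu> + \<nu> - 1) j / pochhammer \<mu> j * Beta \<mu> (\<nu> + real j) * fact j
      / pochhammer (real j + \<mu> + \<nu>) j"

lemma Fp_0: "Fp 0 \<mu> \<nu> = 1"
  by (simp add: Fp_def fc_def)

lemma ortho_main:
  assumes mu: "\<mu> > 0" and nu: "\<nu> > 0"
  shows "Lf \<mu> \<nu> (Fp i \<mu> \<nu> * Fp j \<mu> \<nu>) = (if i = j then Nn j \<mu> \<nu> else 0)"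
proof (cases "i = j")
  case False
  show ?thesis
  proof (cases "i < j")
    case True
    then show ?thesis using False ortho_lower[OF mu nu, of "Fp i \<mu> \<nu>" j] degree_Fp[of i \<mu> \<nu>] by simp
  next
    case ij: False
    then have "j < i" using False by simp
    then show ?thesis using False ortho_lower[OF mu nu, of "Fp j \<mu> \<nu>" i] degree_Fp[of j \<mu> \<nu>]
      by (simp add: mult.commute)
  qed
next
  case True
  then have ij: "i = j" .
  show ?thesis
  proof (cases "j = 0")
    case True
    then show ?thesis using ij Lf_monom[OF mu nu, of 1 0] by (simp add: Fp_0 Nn_def monom_0 one_pCons)
  next
    case False
    then have j1: "j \<ge> 1" by simp
    let ?F = "Fp j \<mu> \<nu>"
    let ?L1 = "\<Sum>s<j. monom (fc j \<mu> \<nu> s) s"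
    let ?L2 = "[:1,-1::real:]^j - monom ((-1)^j) j"
    have a: "Lf \<mu> \<nu> (?F * ?F) = fc j \<mu> \<nu> j * Lf \<mu> \<nu> (monom 1 j * ?F)"
    proof -
      have "?F * ?F = smult (fc j \<mu> \<nu> j) (monom 1 j * ?F) + ?L1 * ?F"
        by (subst (1) Fp_split) (simp add: distrib_right smult_monom_mult)
      then show ?thesis using mu nu ortho_lower[OF mu nu Fp_lower] by (simp add: Lf_add Lf_smult)
    qed
    have b: "Lf \<mu> \<nu> ([:1,-1:]^j * ?F) = (-1)^j * Lf \<mu> \<nu> (monom 1 j * ?F)"
    proof -
      have "[:1,-1:]^j * ?F = smult ((-1)^j) (monom 1 j * ?F) + ?L2 * ?F"
        by (subst (1) onemx_split) (simp only: distrib_right smult_monom_mult mult_1_right)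
      then show ?thesis using mu nu ortho_lower[OF mu nu onemx_lower] by (simp add: Lf_add Lf_smult)
    qed
    have c: "Lf \<mu> \<nu> (monom 1 j * ?F) = (-1)^j * (Beta \<mu> (\<nu> + real j) * fact j / pochhammer (real j + \<mu> + \<nu>) j)"
    proof -
      have "(-1::real)^j * (-1)^j = 1" by (simp add: power_mult_distrib[symmetric])
      then show ?thesis using b onemx_moment[OF mu nu j1] by (metis mult.assoc mult_1)
    qed
    have fj: "fc j \<mu> \<nu> j = (-1)^j * pochhammer (real j + \<mu> + \<nu> - 1) j / pochhammer \<mu> j"
      by (simp add: fc_alt)
    have "(-1::real)^j * (-1)^j = 1" by (simp add: power_mult_distrib[symmetric])
    then show ?thesis using ij a c unfolding fj Nn_def by (simp add: field_simps)
  qed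
qed



definition Hc :: "nat \<Rightarrow> real \<Rightarrow> real \<Rightarrow> nat \<Rightarrow> real" where
  "Hc j \<beta> \<gamma> s = pochhammer (- real j) s * pochhammer \<beta> s / (pochhammer \<gamma> s * fact s)"

definition Hp :: "nat \<Rightarrow> real \<Rightarrow> real \<Rightarrow> real poly" where
  "Hp j \<beta> \<gamma> = (\<Sum>s\<le>j. monom (Hc j \<beta> \<gamma> s) s)"

lemma Hc_zero: "s > j \<Longrightarrow> Hc j \<beta> \<gamma> s = 0"
  unfolding Hc_def by (auto simp: pochhammer_eq_0_iff)

lemma coeff_Hp: "coeff (Hp j \<beta> \<gamma>) s = Hc j \<beta> \<gamma> s"
  unfolding Hp_def coeff_sum by (cases "s \<le> j") (auto simp: Hc_zero)

lemma hyp_poly: "hyp2F1 (- real j) \<beta> \<gamma> z = poly (Hp j \<beta> \<gamma>) z"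
proof -
  have "hyp2F1 (- real j) \<beta> \<gamma> z = (\<Sum>s\<le>j. Hc j \<beta> \<gamma> s * z ^ s)"
    unfolding hyp2F1_def Hc_def[symmetric]
    by (rule suminf_finite) (auto simp: Hc_zero)
  also have "\<dots> = poly (Hp j \<beta> \<gamma>) z"
    unfolding Hp_def poly_sum poly_monom ..
  finally show ?thesis .
qed

lemma Fp_Hp: "Fp j \<mu> \<nu> = Hp j (real j + \<mu> + \<nu> - 1) \<mu>"
  unfolding Fp_def Hp_def fc_def Hc_def ..

lemma Hc_0[simp]: "Hc j \<beta> \<gamma> 0 = 1"
  by (simp add: Hc_def)

lemma contig_E:
  assumes j: "j \<ge> 1" and mu: "\<mu> > 0"
  shows "Hp j (real j + \<mu> + \<nu>) \<mu> = Fp j \<mu> \<nu> - smult (real j / \<mu>) (monom 1 1 * Fp (j-1) (\<mu>+1) (\<nu>+1))"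
proof (rule poly_eqI)
  fix s
  show "coeff (Hp j (real j + \<mu> + \<nu>) \<mu>) s = coeff (Fp j \<mu> \<nu> - smult (real j / \<mu>) (monom 1 1 * Fp (j-1) (\<mu>+1) (\<nu>+1))) s"
  proof (cases s)
    case 0 then show ?thesis by (simp add: coeff_Hp Fp_Hp coeff_monom_mult)
  next
    case (Suc t)
    define A where "A = pochhammer (1 - real j) t"
    define P where "P = pochhammer (real j + \<mu> + \<nu>) t"
    define Q where "Q = pochhammer (\<mu> + 1) t"
    define F where "F = (fact t :: real)"
    have jj: "real (j - 1) = real j - 1" using j by (simp add: of_nat_diff)
    have e1: "pochhammer (- real j) (Suc t) = - real j * A"
      unfolding A_def pochhammer_rec by (simp add: algebra_simps)
    have e2: "pochhammer (real j + \<mu> + \<nu>) (Suc t) = P * (real j + \<mu> + \<nu> + real t)"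
      unfolding P_def by (rule pochhammer_Suc)
    have e2': "pochhammer (real j + \<mu> + \<nu> - 1) (Suc t) = (real j + \<mu> + \<nu> - 1) * P"
      unfolding P_def pochhammer_rec by simp
    have e3: "pochhammer \<mu> (Suc t) = \<mu> * Q"
      unfolding Q_def pochhammer_rec by simp
    have e4: "(fact (Suc t) :: real) = (real t + 1) * F"
      by (simp add: F_def)
    have L: "Hc j (real j + \<mu> + \<nu>) \<mu> (Suc t) = (- real j) * A * (P * (real j + \<mu> + \<nu> + real t)) / (\<mu> * Q * ((real t + 1) * F))"
      unfolding Hc_def e1 e2 e3 e4 by simp
    have R1: "Hc j (real j + \<mu> + \<nu> - 1) \<mu> (Suc t) = (- real j) * A * ((real j + \<mu> + \<nu> - 1) * P) / (\<mu> * Q * ((real t + 1) * F))"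
      unfolding Hc_def e1 e2' e3 e4 by simp
    have R2: "Hc (j-1) (real j + \<mu> + \<nu>) (\<mu> + 1) t = A * P / (Q * F)"
      unfolding Hc_def A_def P_def Q_def F_def jj by (simp add: algebra_simps)
    have fp: "Fp (j-1) (\<mu>+1) (\<nu>+1) = Hp (j-1) (real j + \<mu> + \<nu>) (\<mu>+1)"
      unfolding Fp_Hp by (rule arg_cong[where f="\<lambda>x. Hp (j-1) x (\<mu>+1)"]) (use j in \<open>simp add: of_nat_diff\<close>)
    have c1: "coeff (Fp j \<mu> \<nu>) (Suc t) = Hc j (real j + \<mu> + \<nu> - 1) \<mu> (Suc t)"
      by (simp only: Fp_Hp coeff_Hp)
    have c2: "coeff (Fp (j-1) (\<mu>+1) (\<nu>+1)) t = A * P / (Q * F)"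
      by (simp only: fp coeff_Hp R2)
    have c3: "coeff (monom 1 1 * Fp (j-1) (\<mu>+1) (\<nu>+1)) (Suc t) = A * P / (Q * F)"
      using c2 by (simp add: coeff_monom_mult)
    have nz: "\<mu> \<noteq> 0" "Q \<noteq> 0" "F \<noteq> 0" "real t + 1 \<noteq> 0"
      using mu by (auto simp: Q_def F_def pochhammer_eq_0_iff)
    have key0: "\<And>u K. u \<noteq> 0 \<Longrightarrow> (- real j) * A * (P * (K + u)) / (\<mu> * Q * (u * F))
       = (- real j) * A * (K * P) / (\<mu> * Q * (u * F)) - real j / \<mu> * (A * P / (Q * F))"
      using nz by (simp add: field_simps)
    have key: "(- real j) * A * (P * (real j + \<mu> + \<nu> + real t)) / (\<mu> * Q * ((real t + 1) * F))
       = (- real j) * A * ((real j + \<mu> + \<nu> - 1) * P) / (\<mu> * Q * ((real t + 1) * F)) - real j / \<mu> * (A * P / (Q * F))"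
      using key0[OF nz(4), of "real j + \<mu> + \<nu> - 1"] by (simp add: algebra_simps)
    show ?thesis unfolding Suc coeff_diff coeff_smult c1 c3 coeff_Hp L R1 using key by simp
  qed
qed

lemma contig_O:
  assumes mu: "\<mu> > 0"
  shows "Hp j (real j + \<mu> + \<nu>) \<mu> = Fp (j+1) \<mu> \<nu> + smult ((real j + \<mu> + \<nu>) / \<mu>) (monom 1 1 * Fp j (\<mu>+1) (\<nu>+1))"
proof (rule poly_eqI)
  fix s
  define K where "K = real j + \<mu> + \<nu>"
  have fp1: "Fp (j+1) \<mu> \<nu> = Hp (j+1) K \<mu>"
    unfolding Fp_Hp K_def by (rule arg_cong[where f="\<lambda>x. Hp (j+1) x \<mu>"]) simp
  have fp2: "Fp j (\<mu>+1) (\<nu>+1) = Hp j (K+1) (\<mu>+1)"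
    unfolding Fp_Hp K_def by (rule arg_cong[where f="\<lambda>x. Hp j x (\<mu>+1)"]) simp
  show "coeff (Hp j (real j + \<mu> + \<nu>) \<mu>) s = coeff (Fp (j+1) \<mu> \<nu> + smult ((real j + \<mu> + \<nu>) / \<mu>) (monom 1 1 * Fp j (\<mu>+1) (\<nu>+1))) s"
  proof (cases s)
    case 0 then show ?thesis by (simp add: coeff_Hp Fp_Hp coeff_monom_mult)
  next
    case (Suc t)
    define A where "A = pochhammer (- real j) t"
    define P where "P = pochhammer (K + 1) t"
    define Q where "Q = pochhammer (\<mu> + 1) t"
    define F where "F = (fact t :: real)"
    have e1: "pochhammer (- real j) (Suc t) = A * (- real j + real t)"
      unfolding A_def by (rule pochhammer_Suc)
    have e1': "pochhammer (- real (j+1)) (Suc t) = (- real j - 1) * A"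
      unfolding A_def pochhammer_rec by (simp add: algebra_simps)
    have e2: "pochhammer K (Suc t) = K * P"
      unfolding P_def pochhammer_rec by simp
    have e3: "pochhammer \<mu> (Suc t) = \<mu> * Q"
      unfolding Q_def pochhammer_rec by simp
    have e4: "(fact (Suc t) :: real) = (real t + 1) * F"
      by (simp add: F_def)
    have L: "Hc j K \<mu> (Suc t) = A * (- real j + real t) * (K * P) / (\<mu> * Q * ((real t + 1) * F))"
      unfolding Hc_def e1 e2 e3 e4 by simp
    have R1: "Hc (j+1) K \<mu> (Suc t) = (- real j - 1) * A * (K * P) / (\<mu> * Q * ((real t + 1) * F))"
      unfolding Hc_def e1' e2 e3 e4 by simp
    have R2: "Hc j (K+1) (\<mu> + 1) t = A * P / (Q * F)"
      unfolding Hc_def A_def P_def Q_def F_def by simp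
    have nz: "\<mu> \<noteq> 0" "Q \<noteq> 0" "F \<noteq> 0" "real t + 1 \<noteq> 0"
      using mu by (auto simp: Q_def F_def pochhammer_eq_0_iff)
    have key0: "\<And>u. u \<noteq> 0 \<Longrightarrow> A * (u - 1 - real j) * (K * P) / (\<mu> * Q * (u * F))
       = (- real j - 1) * A * (K * P) / (\<mu> * Q * (u * F)) + K / \<mu> * (A * P / (Q * F))"
      using nz by (simp add: field_simps)
    have key: "A * (- real j + real t) * (K * P) / (\<mu> * Q * ((real t + 1) * F))
       = (- real j - 1) * A * (K * P) / (\<mu> * Q * ((real t + 1) * F)) + K / \<mu> * (A * P / (Q * F))"
      using key0[OF nz(4)] by (simp add: algebra_simps)
    have c1: "coeff (Fp (j+1) \<mu> \<nu>) (Suc t) = Hc (j+1) K \<mu> (Suc t)"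
      by (simp only: fp1 coeff_Hp)
    have c3: "coeff (monom 1 1 * Fp j (\<mu>+1) (\<nu>+1)) (Suc t) = A * P / (Q * F)"
      by (simp add: coeff_monom_mult fp2 coeff_Hp R2)
    show ?thesis unfolding Suc coeff_add coeff_smult c1 c3 K_def[symmetric] coeff_Hp L R1 using key by simp
  qed
qed

definition muA :: "real \<Rightarrow> real" where "muA a = (a + 1) / 2"

definition Rp :: "nat \<Rightarrow> real \<Rightarrow> real \<Rightarrow> real poly" where
  "Rp n a b = (if even n then Fp (n div 2) (muA a) (muA b) else Fp (n div 2 + 1) (muA a) (muA b))"

definition kap :: "nat \<Rightarrow> real \<Rightarrow> real \<Rightarrow> real" where
  "kap n a b = (if even n then real (n div 2) / muA a else - (real (n div 2) + muA a + muA b) / muA a)"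

definition tau :: "nat \<Rightarrow> nat" where
  "tau n = (if even n then n div 2 - 1 else n div 2)"

definition Qp :: "nat \<Rightarrow> real \<Rightarrow> real \<Rightarrow> real poly" where
  "Qp n a b = smult (kap n a b) (Fp (tau n) (muA a + 1) (muA b + 1))"

lemma bigJ_repr:
  assumes a: "a > -1" and c: "1 + c \<noteq> 0"
  shows "bigJ n x a b c = poly (Rp n a b) ((1 - x^2) / (1 - c^2)) - (1 - x^2) / (1 - c^2) * poly (Qp n a b) ((1 - x^2) / (1 - c^2))
          + (1 - x) / (1 + c) * poly (Qp n a b) ((1 - x^2) / (1 - c^2))"
proof -
  define z where "z = (1 - x^2) / (1 - c^2)"
  define \<mu> where "\<mu> = muA a"
  define \<nu> where "\<nu> = muA b"
  have mu: "\<mu> > 0" using a by (simp add: \<mu>_def muA_def)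
  have a1: "a + 1 = 2 * \<mu>" by (simp add: \<mu>_def muA_def)
  have a3: "(a + 3) / 2 = \<mu> + 1" by (simp add: \<mu>_def muA_def field_simps)
  have ma: "(a + 1) / 2 = \<mu>" by (simp add: \<mu>_def muA_def)
  show ?thesis
  proof (cases "even n")
    case True
    then obtain j where n: "n = 2 * j" by (auto elim: evenE)
    have h1: "hyp2F1 (- real n / 2) ((real n + a + b + 2) / 2) ((a + 1) / 2) z = poly (Hp j (real j + \<mu> + \<nu>) \<mu>) z"
    proof -
      have "- real n / 2 = - real j" "(real n + a + b + 2) / 2 = real j + \<mu> + \<nu>"
        by (simp_all add: n \<mu>_def \<nu>_def muA_def field_simps)
      note e = this show ?thesis unfolding ma by (simp only: e hyp_poly)
    qed
    show ?thesis
    proof (cases "j = 0")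
      case True
      have "Hp 0 (real 0 + \<mu> + \<nu>) \<mu> = 1" by (simp add: Hp_def monom_0 one_pCons)
      then show ?thesis using h1 True n unfolding bigJ_def Let_def z_def[symmetric]
        by (simp add: Rp_def Qp_def kap_def Fp_0 \<mu>_def[symmetric] \<nu>_def[symmetric])
    next
      case False
      then have j1: "j \<ge> 1" by simp
      have h2: "hyp2F1 (1 - real n / 2) ((real n + a + b + 2) / 2) ((a + 3) / 2) z = poly (Fp (j-1) (\<mu>+1) (\<nu>+1)) z"
      proof -
        have "1 - real n / 2 = - real (j - 1)" using j1 by (simp add: n of_nat_diff)
        moreover have "(real n + a + b + 2) / 2 = real (j-1) + (\<mu>+1) + (\<nu>+1) - 1"
          using j1 by (simp add: n \<mu>_def \<nu>_def muA_def field_simps of_nat_diff)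
        note e = calculation this show ?thesis unfolding a3 by (simp only: e hyp_poly Fp_Hp)
      qed
      have h1': "poly (Hp j (real j + \<mu> + \<nu>) \<mu>) z = poly (Fp j \<mu> \<nu>) z - z * (real j / \<mu> * poly (Fp (j-1) (\<mu>+1) (\<nu>+1)) z)"
        unfolding contig_E[OF j1 mu] by (simp add: poly_monom)
      have r: "Rp n a b = Fp j \<mu> \<nu>" using n by (simp add: Rp_def \<mu>_def \<nu>_def)
      have q: "poly (Qp n a b) z = real j / \<mu> * poly (Fp (j-1) (\<mu>+1) (\<nu>+1)) z"
        using n by (simp add: Qp_def kap_def tau_def \<mu>_def \<nu>_def)
      have nn: "real n / ((1 + c) * (a + 1)) = real j / \<mu> / (1 + c)"
      proof -
        have "real n / ((1 + c) * (a + 1)) = (2 * real j) / (2 * (\<mu> * (1 + c)))" unfolding a1 n by (simp add: mult_ac)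
        also have "\<dots> = real j / (\<mu> * (1 + c))" by (rule mult_divide_mult_cancel_left) simp
        also have "\<dots> = real j / \<mu> / (1 + c)" by (simp add: divide_divide_eq_left)
        finally show ?thesis .
      qed
      have "bigJ n x a b c = poly (Hp j (real j + \<mu> + \<nu>) \<mu>) z + real n / ((1 + c) * (a + 1)) * (1 - x) * poly (Fp (j-1) (\<mu>+1) (\<nu>+1)) z"
        unfolding bigJ_def Let_def z_def[symmetric] using True h1 h2 by simp
      also have "\<dots> = poly (Rp n a b) z - z * poly (Qp n a b) z + (1 - x) / (1 + c) * poly (Qp n a b) z"
        unfolding h1' r q nn using mu c by (simp add: field_simps)
      finally show ?thesis unfolding z_def .
    qed
  next
    case False
    then obtain j where n: "n = 2 * j + 1" using oddE by blast
    have h1: "hyp2F1 (- (real n - 1) / 2) ((real n + a + b + 1) / 2) ((a + 1) / 2) z = poly (Hp j (real j + \<mu> + \<nu>) \<mu>) z"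
    proof -
      have "- (real n - 1) / 2 = - real j" "(real n + a + b + 1) / 2 = real j + \<mu> + \<nu>"
        by (simp_all add: n \<mu>_def \<nu>_def muA_def field_simps)
      note e = this show ?thesis unfolding ma by (simp only: e hyp_poly)
    qed
    have h2: "hyp2F1 (- (real n - 1) / 2) ((real n + a + b + 3) / 2) ((a + 3) / 2) z = poly (Fp j (\<mu>+1) (\<nu>+1)) z"
    proof -
      have "- (real n - 1) / 2 = - real j" "(real n + a + b + 3) / 2 = real j + (\<mu>+1) + (\<nu>+1) - 1"
        by (simp_all add: n \<mu>_def \<nu>_def muA_def field_simps)
      note e = this show ?thesis unfolding a3 by (simp only: e hyp_poly Fp_Hp)
    qed
    have h1': "poly (Hp j (real j + \<mu> + \<nu>) \<mu>) z = poly (Fp (j+1) \<mu> \<nu>) z + z * ((real j + \<mu> + \<nu>) / \<mu> * poly (Fp j (\<mu>+1) (\<nu>+1)) z)"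
      unfolding contig_O[OF mu] by (simp add: poly_monom)
    have r: "Rp n a b = Fp (j+1) \<mu> \<nu>" using n by (simp add: Rp_def \<mu>_def \<nu>_def)
    have q: "poly (Qp n a b) z = - ((real j + \<mu> + \<nu>) / \<mu>) * poly (Fp j (\<mu>+1) (\<nu>+1)) z"
      using n by (simp add: Qp_def kap_def tau_def \<mu>_def \<nu>_def) (simp add: divide_inverse algebra_simps)
    have nn: "(real n + a + b + 1) / ((1 + c) * (a + 1)) = (real j + \<mu> + \<nu>) / \<mu> / (1 + c)"
    proof -
      have e: "real n + a + b + 1 = 2 * (real j + \<mu> + \<nu>)" by (simp add: n \<mu>_def \<nu>_def muA_def field_simps)
      have "(real n + a + b + 1) / ((1 + c) * (a + 1)) = (2 * (real j + \<mu> + \<nu>)) / (2 * (\<mu> * (1 + c)))" unfolding a1 e by (simp add: mult_ac)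
      also have "\<dots> = (real j + \<mu> + \<nu>) / (\<mu> * (1 + c))" by (rule mult_divide_mult_cancel_left) simp
      also have "\<dots> = (real j + \<mu> + \<nu>) / \<mu> / (1 + c)" by (simp add: divide_divide_eq_left)
      finally show ?thesis .
    qed
    have "bigJ n x a b c = poly (Hp j (real j + \<mu> + \<nu>) \<mu>) z - (real n + a + b + 1) / ((1 + c) * (a + 1)) * (1 - x) * poly (Fp j (\<mu>+1) (\<nu>+1)) z"
      unfolding bigJ_def Let_def z_def[symmetric] using False h1 h2 by simp
    also have "\<dots> = poly (Rp n a b) z - z * poly (Qp n a b) z + (1 - x) / (1 + c) * poly (Qp n a b) z"
      unfolding h1' r q nn using mu c by (simp add: field_simps)
    finally show ?thesis unfolding z_def .
  qed
qed



lemma pos_npi: "(x::real) > 0 \<Longrightarrow> x \<notin> \<int>\<^sub>\<le>\<^sub>0"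
  by (auto elim!: nonpos_Ints_cases)

lemma G1: "(x::real) > 0 \<Longrightarrow> Gamma (x + 1) = x * Gamma x"
  using Gamma_plus1 pos_npi by blast

lemma G2: assumes "(x::real) > 0" shows "Gamma (x + real n) = Gamma x * pochhammer x n"
proof -
  have "Gamma x > 0" using assms by simp
  then show ?thesis using pochhammer_Gamma[OF pos_npi[OF assms], of n] by (simp add: field_simps)
qed

lemma poch_pos_nz: "(x::real) > 0 \<Longrightarrow> pochhammer x n \<noteq> 0"
  by (simp add: pochhammer_pos less_imp_neq[symmetric])

lemma NnRel:
  assumes mu: "\<mu> > 0" and nu: "\<nu> > 0"
  shows "Nn (Suc j) \<mu> \<nu> = (real j + \<mu> + \<nu>) * (real j + 1) / \<mu>^2 * Nn j (\<mu>+1) (\<nu>+1)"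
proof -
  define L where "L = real j + \<mu> + \<nu>"
  define y where "y = \<nu> + real j + 1"
  have Lp: "L > 0" using mu nu by (simp add: L_def)
  have e1: "pochhammer (real (Suc j) + \<mu> + \<nu> - 1) (Suc j) = L * pochhammer (L+1) j"
    unfolding pochhammer_rec L_def by (simp add: algebra_simps)
  have e2: "pochhammer \<mu> (Suc j) = \<mu> * pochhammer (\<mu>+1) j" by (rule pochhammer_rec)
  have e3: "pochhammer (real (Suc j) + \<mu> + \<nu>) (Suc j) = (L+1) * pochhammer (L+2) j"
    unfolding pochhammer_rec L_def by (simp add: algebra_simps)
  have e4: "Beta \<mu> (\<nu> + real (Suc j)) = (L+1) / \<mu> * Beta (\<mu>+1) y"
  proof -
    have h0: "(\<mu> + y) * Beta (\<mu> + 1) y = \<mu> * Beta \<mu> y" by (rule Beta_plus1_left[OF pos_npi[OF mu]])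
    have "\<mu> + y = L + 1" by (simp add: L_def y_def)
    then have h: "(L + 1) * Beta (\<mu> + 1) y = \<mu> * Beta \<mu> y" using h0 by simp
    have "Beta \<mu> y = (L+1) / \<mu> * Beta (\<mu>+1) y" using mu h by (simp add: field_simps)
    moreover have "Beta \<mu> (\<nu> + real (Suc j)) = Beta \<mu> y" by (simp add: y_def add_ac)
    ultimately show ?thesis by simp
  qed
  have f1: "pochhammer (real j + (\<mu>+1) + (\<nu>+1) - 1) j = pochhammer (L+1) j"
    by (simp add: L_def algebra_simps)
  have f2: "pochhammer (real j + (\<mu>+1) + (\<nu>+1)) j = pochhammer (L+2) j"
    by (simp add: L_def algebra_simps)
  have f3: "Beta (\<mu>+1) (\<nu> + 1 + real j) = Beta (\<mu>+1) y" by (simp add: y_def add_ac)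
  have nz: "pochhammer (\<mu>+1) j \<noteq> 0" "pochhammer (L+2) j \<noteq> 0" "L + 1 \<noteq> 0" "\<mu> \<noteq> 0"
    using mu Lp by (auto intro!: poch_pos_nz)
  obtain M where M: "L + 1 = M" by blast
  have "M \<noteq> 0" using nz M by simp
  then show ?thesis unfolding Nn_def e1 e2 e3 e4 f1 f2 f3 L_def[symmetric] M using nz
    by (simp add: field_simps power2_eq_square)
qed

definition rhoI :: "nat \<Rightarrow> nat" where "rhoI n = (if even n then n div 2 else n div 2 + 1)"

definition Xv :: "nat \<Rightarrow> nat \<Rightarrow> real \<Rightarrow> real \<Rightarrow> real" where
  "Xv n m a b = Lf (muA a) (muA b) (Rp n a b * Rp m a b) + Lf (muA a + 1) (muA b + 1) (Qp n a b * Qp m a b)"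

lemma Rp_rho: "Rp n a b = Fp (rhoI n) (muA a) (muA b)"
  by (simp add: Rp_def rhoI_def)

lemma LR:
  assumes "a > -1" "b > -1"
  shows "Lf (muA a) (muA b) (Rp n a b * Rp m a b) = (if rhoI n = rhoI m then Nn (rhoI n) (muA a) (muA b) else 0)"
proof -
  have pos: "muA a > 0" "muA b > 0" using assms by (auto simp: muA_def field_simps)
  show ?thesis unfolding Rp_rho using ortho_main[OF pos, of "rhoI n" "rhoI m"] by simp
qed

lemma LQ:
  assumes "a > -1" "b > -1"
  shows "Lf (muA a + 1) (muA b + 1) (Qp n a b * Qp m a b)
     = kap n a b * kap m a b * (if tau n = tau m then Nn (tau n) (muA a + 1) (muA b + 1) else 0)"
proof -
  have "Qp n a b * Qp m a b = smult (kap n a b * kap m a b) (Fp (tau n) (muA a + 1) (muA b + 1) * Fp (tau m) (muA a + 1) (muA b + 1))"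
    by (simp add: Qp_def mult_ac)
  moreover have pos: "muA a + 1 > 0" "muA b + 1 > 0" using assms by (auto simp: muA_def field_simps)
  ultimately show ?thesis using ortho_main[OF pos, of "tau n" "tau m"]
    by (simp add: Lf_smult)
qed

lemma rho_eq: "n < m \<Longrightarrow> rhoI n = rhoI m \<Longrightarrow> odd n \<and> m = n + 1"
  unfolding rhoI_def by (cases "even n"; cases "even m") (auto elim!: evenE oddE)

lemma tau_eq: "1 \<le> n \<Longrightarrow> n < m \<Longrightarrow> tau n = tau m \<Longrightarrow> odd n \<and> m = n + 1"
  unfolding tau_def by (cases "even n"; cases "even m") (auto elim!: evenE oddE)

lemma Xv_sym: "Xv n m a b = Xv m n a b"
  unfolding Xv_def by (simp add: mult.commute)

lemma Xv_off_lt: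
  assumes a: "a > -1" and b: "b > -1" and nm: "n < m"
  shows "Xv n m a b = 0"
proof -
  define \<mu> where "\<mu> = muA a"
  define \<nu> where "\<nu> = muA b"
  have mu: "\<mu> > 0" and nu: "\<nu> > 0" using a b by (auto simp: \<mu>_def \<nu>_def muA_def)
  note X = Xv_def LR[OF a b] LQ[OF a b]
  show ?thesis
  proof (cases "n = 0")
    case True
    have "rhoI n \<noteq> rhoI m" using True nm by (auto simp: rhoI_def)
    moreover have "kap n a b = 0" using True by (simp add: kap_def)
    ultimately show ?thesis by (simp add: X)
  next
    case False
    then have n1: "1 \<le> n" by simp
    show ?thesis
    proof (cases "odd n \<and> m = n + 1")
      case True
      then obtain j where n: "n = 2 * j + 1" and m: "m = 2 * j + 2" by (auto elim!: oddE)
      have r: "rhoI n = Suc j" "rhoI m = Suc j" by (simp_all add: rhoI_def n m)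
      have t: "tau n = j" "tau m = j" by (simp_all add: tau_def n m)
      have k: "kap n a b = - (real j + \<mu> + \<nu>) / \<mu>" "kap m a b = (real j + 1) / \<mu>"
        by (simp_all add: kap_def n m \<mu>_def \<nu>_def)
      have "Xv n m a b = Nn (Suc j) \<mu> \<nu> + (- (real j + \<mu> + \<nu>) / \<mu>) * ((real j + 1) / \<mu>) * Nn j (\<mu>+1) (\<nu>+1)"
        by (simp add: X r t k \<mu>_def \<nu>_def)
      also have "\<dots> = 0" unfolding NnRel[OF mu nu] using mu by (simp add: field_simps power2_eq_square)
      finally show ?thesis .
    next
      case False
      then have "rhoI n \<noteq> rhoI m" "tau n \<noteq> tau m" using rho_eq[OF nm] tau_eq[OF n1 nm] by auto
      then show ?thesis by (simp add: X)
    qed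
  qed
qed

lemma Xv_off:
  assumes "a > -1" "b > -1" "n \<noteq> m"
  shows "Xv n m a b = 0"
proof (cases "n < m")
  case True then show ?thesis using Xv_off_lt assms by simp
next
  case False then have "m < n" using assms by simp
  then show ?thesis using Xv_off_lt[of a b m n] assms Xv_sym by simp
qed

lemma NNp:
  assumes mu: "\<mu> > 0" and nu: "\<nu> > 0"
  shows "Nn j (\<mu>+1) (\<nu>+1) * (real j + \<mu> + \<nu> + 1 + real j)
       = Gamma (\<mu>+1) * Gamma (\<nu> + 1 + real j) / Gamma (real j + \<mu> + \<nu> + 1) * fact j / pochhammer (\<mu>+1) j"
proof -
  define L where "L = real j + \<mu> + \<nu>"
  have Lp: "L > 0" using mu nu by (simp add: L_def)
  have f1: "pochhammer (real j + (\<mu>+1) + (\<nu>+1) - 1) j = pochhammer (L+1) j"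
    by (simp add: L_def algebra_simps)
  have f2: "pochhammer (real j + (\<mu>+1) + (\<nu>+1)) j = pochhammer (L+2) j"
    by (simp add: L_def algebra_simps)
  have pe: "pochhammer (L+1) j * (L + 1 + real j) = (L+1) * pochhammer (L+2) j"
    using pochhammer_Suc[of "L+1" j] pochhammer_rec[of "L+1" j] by (simp add: algebra_simps)
  have B: "Beta (\<mu>+1) (\<nu>+1 + real j) = Gamma (\<mu>+1) * Gamma (\<nu> + 1 + real j) / ((L+1) * Gamma (L+1))"
  proof -
    have "\<mu> + 1 + (\<nu> + 1 + real j) = (L + 1) + 1" by (simp add: L_def)
    then have "Gamma (\<mu> + 1 + (\<nu> + 1 + real j)) = (L+1) * Gamma (L+1)" using G1[of "L+1"] Lp by simp
    then show ?thesis by (simp add: Beta_def)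
  qed
  have nz: "pochhammer (\<mu>+1) j \<noteq> 0" "pochhammer (L+2) j \<noteq> 0" "Gamma (L+1) \<noteq> 0"
    using mu Lp by (auto intro!: poch_pos_nz simp: less_imp_neq[symmetric])
  obtain M where M: "L + 1 = M" by blast
  have Mnz: "M \<noteq> 0" using Lp M by simp
  have pe': "pochhammer M j * (M + real j) = M * pochhammer (L+2) j" using pe M by simp
  have "Nn j (\<mu>+1) (\<nu>+1) * (L + 1 + real j)
       = pochhammer M j * (M + real j) / pochhammer (\<mu>+1) j * Beta (\<mu>+1) (\<nu>+1 + real j) * fact j / pochhammer (L+2) j"
    unfolding Nn_def f1 f2 M by (simp add: algebra_simps)
  also have "\<dots> = Gamma (\<mu>+1) * Gamma (\<nu> + 1 + real j) / Gamma M * fact j / pochhammer (\<mu>+1) j"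
    unfolding pe' B M using nz Mnz by (simp add: field_simps)
  finally have fin: "Nn j (\<mu>+1) (\<nu>+1) * (L + 1 + real j) = Gamma (\<mu>+1) * Gamma (\<nu> + 1 + real j) / Gamma M * fact j / pochhammer (\<mu>+1) j" .
  show ?thesis using fin[unfolded M[symmetric]] by (simp add: L_def add_ac)
qed

lemma Xv_diag:
  assumes a: "a > -1" and b: "b > -1"
  shows "Xv n n a b = hnorm n a b"
proof -
  define \<mu> where "\<mu> = muA a"
  define \<nu> where "\<nu> = muA b"
  have mu: "\<mu> > 0" and nu: "\<nu> > 0" using a b by (auto simp: \<mu>_def \<nu>_def muA_def field_simps)
  have ma: "(a + 1) / 2 = \<mu>" by (simp add: \<mu>_def muA_def)
  note X = Xv_def LR[OF a b] LQ[OF a b]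
  have Gm: "Gamma (\<mu> + 1 + real i) = Gamma (\<mu>+1) * pochhammer (\<mu>+1) i" for i using G2[of "\<mu>+1" i] mu by simp
  have Gmu1: "Gamma (\<mu> + 1) = \<mu> * Gamma \<mu>" using G1 mu by simp
  have pm: "pochhammer \<mu> (Suc i) = \<mu> * pochhammer (\<mu>+1) i" for i by (rule pochhammer_rec)
  have nzp: "pochhammer (\<mu>+1) i \<noteq> 0" for i using mu by (intro poch_pos_nz) simp
  have nzG: "Gamma (x::real) \<noteq> 0" if "x > 0" for x using that by (simp add: less_imp_neq[symmetric])
  show ?thesis
  proof (cases "even n")
    case True
    then obtain j where n: "n = 2 * j" by (auto elim: evenE)
    show ?thesis
    proof (cases j)
      case 0
      have "Xv n n a b = Beta \<mu> \<nu>"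
        by (simp add: X n 0 rhoI_def kap_def Nn_def \<mu>_def \<nu>_def)
      also have "\<dots> = hnorm n a b"
      proof -
        have e1: "(real n + b + 1) / 2 = \<nu>" by (simp add: n 0 \<nu>_def muA_def)
        have e2: "(real n + a + 3) / 2 = \<mu> + 1" by (simp add: n 0 \<mu>_def muA_def field_simps)
        have e3: "real n + a + 1 = 2 * \<mu>" by (simp add: n 0 \<mu>_def muA_def field_simps)
        have e4: "(real n + a + b + 2) / 2 = \<mu> + \<nu>" by (simp add: n 0 \<mu>_def \<nu>_def muA_def field_simps)
        have e5: "n div 2 = 0" by (simp add: n 0)
        have h: "hnorm n a b = 2 * Gamma \<nu> * Gamma (\<mu> + 1) * fact 0 / (2 * \<mu> * Gamma (\<mu> + \<nu>) * (pochhammer \<mu> 0)^2)"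
          unfolding hnorm_def using True by (simp only: e1 e2 e3 e4 e5 ma if_True)
        show ?thesis unfolding h Beta_def Gmu1 using mu by (simp add: field_simps)
      qed
      finally show ?thesis .
    next
      case (Suc i)
      define L where "L = real i + \<mu> + \<nu>"
      have r: "rhoI n = Suc i" and t: "tau n = i" and k: "kap n a b = real (Suc i) / \<mu>"
        by (simp_all add: rhoI_def tau_def kap_def n Suc \<mu>_def)
      have "Xv n n a b = Nn (Suc i) \<mu> \<nu> + (real (Suc i) / \<mu>) * (real (Suc i) / \<mu>) * Nn i (\<mu>+1) (\<nu>+1)"
        by (simp add: X r t k \<mu>_def \<nu>_def)
      also have "\<dots> = (real i + 1) / \<mu>^2 * (Nn i (\<mu>+1) (\<nu>+1) * (real i + \<mu> + \<nu> + 1 + real i))"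
        unfolding NnRel[OF mu nu] using mu by (simp add: field_simps power2_eq_square)
      also have "\<dots> = (real i + 1) / \<mu>^2 * (Gamma (\<mu>+1) * Gamma (\<nu> + 1 + real i) / Gamma (L + 1) * fact i / pochhammer (\<mu>+1) i)"
        unfolding NNp[OF mu nu] L_def by (simp add: add_ac)
      also have "\<dots> = hnorm n a b"
      proof -
        have e1: "(real n + b + 1) / 2 = \<nu> + 1 + real i" by (simp add: n Suc \<nu>_def muA_def field_simps)
        have e2: "(real n + a + 3) / 2 = (\<mu> + 1 + real i) + 1" by (simp add: n Suc \<mu>_def muA_def field_simps)
        have e3: "real n + a + 1 = 2 * (\<mu> + 1 + real i)" by (simp add: n Suc \<mu>_def muA_def field_simps)
        have e4: "(real n + a + b + 2) / 2 = L + 1" by (simp add: n Suc L_def \<mu>_def \<nu>_def muA_def field_simps)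
        have e5: "n div 2 = Suc i" by (simp add: n Suc)
        have h: "hnorm n a b = 2 * Gamma (\<nu> + 1 + real i) * Gamma ((\<mu> + 1 + real i) + 1) * fact (Suc i)
            / (2 * (\<mu> + 1 + real i) * Gamma (L+1) * (pochhammer \<mu> (Suc i))^2)"
          unfolding hnorm_def using True by (simp only: e1 e2 e3 e4 e5 ma if_True)
        have g: "Gamma ((\<mu> + 1 + real i) + 1) = (\<mu> + 1 + real i) * Gamma (\<mu> + 1 + real i)"
          using G1[of "\<mu> + 1 + real i"] mu by simp
        obtain M where M: "\<mu> + 1 + real i = M" by blast
        have Mnz: "M \<noteq> 0" using M mu by auto
        have GL: "Gamma (L+1) \<noteq> 0" using mu nu by (intro nzG) (simp add: L_def)
        have g2: "Gamma ((\<mu> + 1 + real i) + 1) = (\<mu> + 1 + real i) * (\<mu> * Gamma \<mu> * pochhammer (\<mu>+1) i)"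
          using g Gm[of i] Gmu1 by simp
        have h2: "hnorm n a b = 2 * Gamma (\<nu> + 1 + real i) * ((\<mu> + 1 + real i) * (\<mu> * Gamma \<mu> * pochhammer (\<mu>+1) i)) * ((real i + 1) * fact i)
            / (2 * (\<mu> + 1 + real i) * Gamma (L+1) * (\<mu> * pochhammer (\<mu>+1) i)^2)"
          unfolding h g2 pm fact_Suc by (simp add: algebra_simps)
        show ?thesis unfolding h2 Gmu1 M using Mnz GL nzp[of i] mu
          by (simp add: field_simps power2_eq_square)
      qed
      finally show ?thesis .
    qed
  next
    case False
    then obtain j where n: "n = 2 * j + 1" using oddE by blast
    define L where "L = real j + \<mu> + \<nu>"
    have r: "rhoI n = Suc j" and t: "tau n = j" and k: "kap n a b = - L / \<mu>"
      by (simp_all add: rhoI_def tau_def kap_def n L_def \<mu>_def \<nu>_def)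
    have "Xv n n a b = Nn (Suc j) \<mu> \<nu> + (- L / \<mu>) * (- L / \<mu>) * Nn j (\<mu>+1) (\<nu>+1)"
      by (simp add: X r t k \<mu>_def \<nu>_def)
    also have "\<dots> = L / \<mu>^2 * (Nn j (\<mu>+1) (\<nu>+1) * (real j + \<mu> + \<nu> + 1 + real j))"
      unfolding NnRel[OF mu nu] L_def using mu by (simp add: field_simps power2_eq_square)
    also have "\<dots> = L / \<mu>^2 * (Gamma (\<mu>+1) * Gamma (\<nu> + 1 + real j) / Gamma (L + 1) * fact j / pochhammer (\<mu>+1) j)"
      unfolding NNp[OF mu nu] L_def by (simp add: add_ac)
    also have "\<dots> = hnorm n a b"
    proof -
      have e0: "real n + a + b + 1 = 2 * L" by (simp add: n L_def \<mu>_def \<nu>_def muA_def field_simps)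
      have e1: "(real n + b + 2) / 2 = \<nu> + 1 + real j" by (simp add: n \<nu>_def muA_def field_simps)
      have e2: "(real n + a + 2) / 2 = \<mu> + 1 + real j" by (simp add: n \<mu>_def muA_def field_simps)
      have e4: "(real n + a + b + 3) / 2 = L + 1" by (simp add: n L_def \<mu>_def \<nu>_def muA_def field_simps)
      have e5: "(n - 1) div 2 = j" "(n + 1) div 2 = Suc j" by (simp_all add: n)
      have h: "hnorm n a b = 2 * L * Gamma (\<nu> + 1 + real j) * Gamma (\<mu> + 1 + real j) * fact j
            / (2 * Gamma (L+1) * (pochhammer \<mu> (Suc j))^2)"
        unfolding hnorm_def using False by (simp only: e0 e1 e2 e4 e5 ma if_False)
      have GL: "Gamma (L+1) \<noteq> 0" using mu nu by (intro nzG) (simp add: L_def)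
      show ?thesis unfolding h Gm pm Gmu1 using GL nzp[of j] mu
        by (simp add: field_simps power2_eq_square)
    qed
    finally show ?thesis .
  qed
qed

lemma Xv_val:
  assumes "a > -1" "b > -1"
  shows "Xv n m a b = (if n = m then hnorm n a b else 0)"
  using Xv_diag[OF assms] Xv_off[OF assms] by auto



lemma sym_alg:
  fixes x c z pn pm qn qm :: real
  assumes hz: "x^2 = 1 - (1 - c^2) * z" and c: "1 + c \<noteq> 0"
  shows "(pn - z * qn + (1 - x) / (1 + c) * qn) * (pm - z * qm + (1 - x) / (1 + c) * qm) * ((1 + x) * (x - c))
       + (pn - z * qn + (1 + x) / (1 + c) * qn) * (pm - z * qm + (1 + x) / (1 + c) * qm) * ((1 - x) * (x + c))
       = 2 * x * (1 - c) * (pn * pm + z * (1 - z) * qn * qm)"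
proof -
  define u where "u = 1 / (1 + c)"
  have u: "u * (1 + c) = 1" using c by (simp add: u_def)
  have e: "(1 - x) / (1 + c) = (1 - x) * u" "(1 + x) / (1 + c) = (1 + x) * u" by (simp_all add: u_def)
  show ?thesis unfolding e
  proof -
    have "x * x = 1 - (1 - c*c) * z" using hz by (simp add: power2_eq_square)
    then show "(pn - z * qn + (1 - x) * u * qn) * (pm - z * qm + (1 - x) * u * qm) * ((1 + x) * (x - c))
       + (pn - z * qn + (1 + x) * u * qn) * (pm - z * qm + (1 + x) * u * qm) * ((1 - x) * (x + c))
       = 2 * x * (1 - c) * (pn * pm + z * (1 - z) * qn * qm)"
      using u by algebra
  qed
qed

lemma refl_gen:
  fixes f :: "real \<Rightarrow> real"
  shows "set_integrable lborel {a..b} (\<lambda>x. f (s - x)) \<longleftrightarrow> set_integrable lborel {s-b..s-a} f"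
    and "(LINT x:{a..b}|lborel. f (s - x)) = (LINT x:{s-b..s-a}|lborel. f x)"
proof -
  let ?h = "\<lambda>x. indicator {s-b..s-a} x *\<^sub>R f x"
  have e: "(\<lambda>x. ?h (s + (-1) * x)) = (\<lambda>x. indicator {a..b} x *\<^sub>R f (s - x))"
    by (auto simp: indicator_def fun_eq_iff)
  show "set_integrable lborel {a..b} (\<lambda>x. f (s - x)) \<longleftrightarrow> set_integrable lborel {s-b..s-a} f"
    unfolding set_integrable_def using lborel_integrable_real_affine_iff[of "-1" ?h s] e by simp
  show "(LINT x:{a..b}|lborel. f (s - x)) = (LINT x:{s-b..s-a}|lborel. f x)"
    unfolding set_lebesgue_integral_def using lborel_integral_real_affine[of "-1" ?h s] e by simp
qed

lemma refl01:
  fixes f :: "real \<Rightarrow> real"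
  shows "set_integrable lborel {0..1} (\<lambda>x. f (1 - x)) \<longleftrightarrow> set_integrable lborel {0..1} f"
    and "(LINT x:{0..1}|lborel. f (1 - x)) = (LINT x:{0..1}|lborel. f x)"
  using refl_gen[of 0 1 f 1] by simp_all

lemma subst01:
  fixes \<phi> :: "real \<Rightarrow> real"
  assumes c: "\<bar>c\<bar> < 1" and phi: "set_integrable lborel {0..1} \<phi>"
  shows "set_integrable lborel {\<bar>c\<bar>..1} (\<lambda>x. \<phi> ((x^2 - c^2) / (1 - c^2)) * (2 * x / (1 - c^2)))"
    and "(LINT x:{\<bar>c\<bar>..1}|lborel. \<phi> ((x^2 - c^2) / (1 - c^2)) * (2 * x / (1 - c^2))) = (LINT t:{0..1}|lborel. \<phi> t)"
proof -
  define K0 where "K0 = 1 - c^2"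
  have K0: "K0 > 0" using c abs_square_less_1[of c] by (simp add: K0_def)
  define g where "g x = (x^2 - c^2) / K0" for x
  define g' where "g' x = 2 * x / K0" for x
  have ga: "g \<bar>c\<bar> = 0" and gb: "g 1 = 1" using K0 by (simp_all add: g_def K0_def)
  have I: "set_integrable lborel {g \<bar>c\<bar>..g 1} \<phi>" using phi ga gb by simp
  have D: "\<And>x. x \<in> {\<bar>c\<bar>..1} \<Longrightarrow> (g has_real_derivative g' x) (at x)"
    unfolding g_def g'_def using K0 by (auto intro!: derivative_eq_intros simp: field_simps)
  have C: "continuous_on {\<bar>c\<bar>..1} g'" unfolding g'_def using K0 by (intro continuous_intros) auto
  have N: "\<And>x. x \<in> {\<bar>c\<bar>..1} \<Longrightarrow> g' x \<ge> 0" unfolding g'_def using K0 by auto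
  have ab: "\<bar>c\<bar> \<le> 1" using c by simp
  note S = integral_substitution[OF I D C N ab]
  show "set_integrable lborel {\<bar>c\<bar>..1} (\<lambda>x. \<phi> ((x^2 - c^2) / (1 - c^2)) * (2 * x / (1 - c^2)))"
    using S(1) by (simp add: g_def g'_def K0_def)
  have "(LINT t:{0..1}|lborel. \<phi> t) = (LBINT x. \<phi> x * indicator {g \<bar>c\<bar>..g 1} x)"
    unfolding set_lebesgue_integral_def ga gb by (simp add: mult.commute)
  also have "\<dots> = (LBINT x. \<phi> (g x) * g' x * indicator {\<bar>c\<bar>..1} x)" by (rule S(2))
  also have "\<dots> = (LINT x:{\<bar>c\<bar>..1}|lborel. \<phi> ((x^2 - c^2) / (1 - c^2)) * (2 * x / (1 - c^2)))"
    unfolding set_lebesgue_integral_def by (simp add: g_def g'_def K0_def mult.commute)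
  finally show "(LINT x:{\<bar>c\<bar>..1}|lborel. \<phi> ((x^2 - c^2) / (1 - c^2)) * (2 * x / (1 - c^2))) = (LINT t:{0..1}|lborel. \<phi> t)" ..
qed

lemma E_wt:
  assumes c: "\<bar>c\<bar> < 1" and x: "x \<in> {\<bar>c\<bar>..1}"
  shows "(1 - x^2) powr p * (x^2 - c^2) powr q
       = (1 - c^2) powr p * (1 - c^2) powr q * wt (p+1) (q+1) ((1 - x^2) / (1 - c^2))"
proof -
  define K0 where "K0 = 1 - c^2"
  have K0: "K0 > 0" using c abs_square_less_1[of c] by (simp add: K0_def)
  define z where "z = (1 - x^2) / K0"
  have e1: "1 - x^2 = K0 * z" using K0 by (simp add: z_def)
  have e2: "x^2 - c^2 = K0 * (1 - z)" using K0 by (simp add: z_def K0_def field_simps)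
  show ?thesis unfolding K0_def[symmetric] z_def[symmetric] e1 e2 wt_def powr_mult by simp
qed

definition w1 :: "real \<Rightarrow> real \<Rightarrow> real \<Rightarrow> real \<Rightarrow> real" where
  "w1 a b c x = sgn x * (1 + x) * (x - c) * (1 - x^2) powr ((a - 1) / 2) * (x^2 - c^2) powr ((b - 1) / 2)"

definition Jr :: "nat \<Rightarrow> real \<Rightarrow> real \<Rightarrow> real \<Rightarrow> real \<Rightarrow> real" where
  "Jr n a b c x = poly (Rp n a b) ((1 - x^2) / (1 - c^2)) - (1 - x^2) / (1 - c^2) * poly (Qp n a b) ((1 - x^2) / (1 - c^2))
          + (1 - x) / (1 + c) * poly (Qp n a b) ((1 - x^2) / (1 - c^2))"

definition Hf :: "nat \<Rightarrow> nat \<Rightarrow> real \<Rightarrow> real \<Rightarrow> real \<Rightarrow> real" where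
  "Hf n m a b z = poly (Rp n a b * Rp m a b) z * wt (muA a) (muA b) z
                + poly (Qp n a b * Qp m a b) z * wt (muA a + 1) (muA b + 1) z"

definition Kc :: "real \<Rightarrow> real \<Rightarrow> real \<Rightarrow> real" where
  "Kc a b c = (1 - c) * (1 - c^2) powr (muA a + muA b - 1)"

lemma bigJ_Jr: "a > -1 \<Longrightarrow> 1 + c \<noteq> 0 \<Longrightarrow> bigJ n x a b c = Jr n a b c x"
  unfolding Jr_def by (rule bigJ_repr)

lemma Jr_cont:
  assumes c: "\<bar>c\<bar> < 1"
  shows "continuous_on S (Jr n a b c)"
proof -
  have "1 - c^2 \<noteq> 0" "1 + c \<noteq> 0" using c by (auto simp: abs_square_less_1 less_imp_neq)
  then show ?thesis unfolding Jr_def by (intro continuous_intros) auto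
qed

lemma Jr_meas:
  assumes c: "\<bar>c\<bar> < 1"
  shows "Jr n a b c \<in> borel_measurable borel"
  using Jr_cont[OF c, of UNIV] by (rule borel_measurable_continuous_onI)

lemma Jr_bound:
  assumes c: "\<bar>c\<bar> < 1"
  obtains M where "M \<ge> 0" "\<And>y. y \<in> {-1..1} \<Longrightarrow> \<bar>Jr n a b c y\<bar> \<le> M"
proof -
  have "compact (Jr n a b c ` {-1..1})"
    by (intro compact_continuous_image Jr_cont[OF c]) simp
  then have "bounded (Jr n a b c ` {-1..1})" by (rule compact_imp_bounded)
  then obtain M where M: "\<forall>x\<in>Jr n a b c ` {-1..1}. norm x \<le> M" unfolding bounded_iff by blast
  have "norm (Jr n a b c 0) \<le> M" using M by auto
  then have "M \<ge> 0" by (metis norm_ge_zero order_trans)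
  then show ?thesis using that M by auto
qed

lemma w1_meas: "w1 a b c \<in> borel_measurable borel"
  unfolding w1_def by measurable

lemma sym_point:
  assumes a: "a > -1" and b: "b > -1" and c: "\<bar>c\<bar> < 1" and x: "x \<in> {\<bar>c\<bar>..1}"
  shows "Jr n a b c x * Jr m a b c x * w1 a b c x + Jr n a b c (-x) * Jr m a b c (-x) * w1 a b c (-x)
       = Kc a b c * Hf n m a b (1 - (x^2 - c^2) / (1 - c^2)) * (2 * x / (1 - c^2))"
proof -
  define K0 where "K0 = 1 - c^2"
  have K0: "K0 > 0" using c abs_square_less_1[of c] by (simp add: K0_def)
  have c1: "1 + c \<noteq> 0" using c by auto
  define \<mu> where "\<mu> = muA a"
  define \<nu> where "\<nu> = muA b"
  define z where "z = (1 - x^2) / K0"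
  have x0: "x \<ge> 0" using x by auto
  have x1: "x \<le> 1" using x by auto
  have xc: "x^2 \<ge> c^2" using x by (auto intro!: power_mono simp: abs_le_square_iff[symmetric])
  have z01: "z \<in> {0..1}" using K0 xc x0 x1 by (auto simp: z_def K0_def field_simps power_le_one)
  have gz: "1 - (x^2 - c^2) / (1 - c^2) = z" using K0 by (simp add: z_def K0_def field_simps)
  have am: "(a - 1) / 2 = \<mu> - 1" "(b - 1) / 2 = \<nu> - 1" by (simp_all add: \<mu>_def \<nu>_def muA_def field_simps)
  have E: "(1 - x^2) powr ((a - 1) / 2) * (x^2 - c^2) powr ((b - 1) / 2) = K0 powr (\<mu> - 1) * K0 powr (\<nu> - 1) * wt \<mu> \<nu> z"
    unfolding am using E_wt[OF c x, of "\<mu> - 1" "\<nu> - 1"] by (simp add: K0_def z_def)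
  define E where "E = (1 - x^2) powr ((a - 1) / 2) * (x^2 - c^2) powr ((b - 1) / 2)"
  define pn where "pn = poly (Rp n a b) z"
  define pm where "pm = poly (Rp m a b) z"
  define qn where "qn = poly (Qp n a b) z"
  define qm where "qm = poly (Qp m a b) z"
  have J1: "Jr k a b c x = poly (Rp k a b) z - z * poly (Qp k a b) z + (1 - x) / (1 + c) * poly (Qp k a b) z" for k
    unfolding Jr_def z_def K0_def ..
  have J2: "Jr k a b c (-x) = poly (Rp k a b) z - z * poly (Qp k a b) z + (1 + x) / (1 + c) * poly (Qp k a b) z" for k
    unfolding Jr_def z_def K0_def by simp
  have wt': "z * (1 - z) * wt \<mu> \<nu> z = wt (\<mu>+1) (\<nu>+1) z"
    using wt_shift1[OF z01, of 1 \<mu> \<nu>] wt_shift2[OF z01, of 1 "\<mu>+1" \<nu>] by (simp add: mult.assoc) (metis mult.left_commute)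
  have KK: "K0 powr (\<mu> - 1) * K0 powr (\<nu> - 1) = K0 powr (\<mu> + \<nu> - 1) / K0"
  proof -
    have "K0 powr (\<mu> - 1) * K0 powr (\<nu> - 1) * K0 powr 1 = K0 powr ((\<mu> - 1) + (\<nu> - 1) + 1)"
      by (simp only: powr_add)
    moreover have "(\<mu> - 1) + (\<nu> - 1) + 1 = \<mu> + \<nu> - 1" by simp
    moreover have "K0 powr 1 = K0" using K0 by simp
    ultimately show ?thesis using K0 by (simp add: field_simps)
  qed
  have hz: "x^2 = 1 - (1 - c^2) * z" using K0 by (simp add: z_def K0_def)
  show ?thesis
  proof (cases "x = 0")
    case True then show ?thesis by (simp add: w1_def)
  next
    case False
    then have xp: "x > 0" using x0 by simp
    have w1p: "w1 a b c x = (1 + x) * (x - c) * E" using xp by (simp add: w1_def E_def)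
    have w1m: "w1 a b c (-x) = (1 - x) * (x + c) * E" using xp by (simp add: w1_def E_def algebra_simps)
    have alg: "(pn - z * qn + (1 - x) / (1 + c) * qn) * (pm - z * qm + (1 - x) / (1 + c) * qm) * ((1 + x) * (x - c))
       + (pn - z * qn + (1 + x) / (1 + c) * qn) * (pm - z * qm + (1 + x) / (1 + c) * qm) * ((1 - x) * (x + c))
       = 2 * x * (1 - c) * (pn * pm + z * (1 - z) * qn * qm)"
      by (rule sym_alg[OF hz c1])
    have "Jr n a b c x * Jr m a b c x * w1 a b c x + Jr n a b c (-x) * Jr m a b c (-x) * w1 a b c (-x)
        = 2 * x * (1 - c) * (pn * pm + z * (1 - z) * qn * qm) * E"
      unfolding w1p w1m J1 J2 pn_def[symmetric] pm_def[symmetric] qn_def[symmetric] qm_def[symmetric]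
    proof -
      have dd: "\<And>A B. A * ((1 + x) * (x - c) * E) + B * ((1 - x) * (x + c) * E) = (A * ((1 + x) * (x - c)) + B * ((1 - x) * (x + c))) * E"
        by (simp add: algebra_simps)
      show "(pn - z * qn + (1 - x) / (1 + c) * qn) * (pm - z * qm + (1 - x) / (1 + c) * qm) * ((1 + x) * (x - c) * E) +
            (pn - z * qn + (1 + x) / (1 + c) * qn) * (pm - z * qm + (1 + x) / (1 + c) * qm) * ((1 - x) * (x + c) * E) =
            2 * x * (1 - c) * (pn * pm + z * (1 - z) * qn * qm) * E"
        unfolding dd alg ..
    qed
    also have "\<dots> = 2 * x * (1 - c) * (pn * pm * wt \<mu> \<nu> z + qn * qm * (z * (1 - z) * wt \<mu> \<nu> z)) * (K0 powr (\<mu> - 1) * K0 powr (\<nu> - 1))"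
      unfolding E_def E by (simp add: algebra_simps)
    also have "\<dots> = Kc a b c * Hf n m a b z * (2 * x / K0)"
      unfolding wt' KK Kc_def Hf_def pn_def pm_def qn_def qm_def \<mu>_def[symmetric] \<nu>_def[symmetric] K0_def[symmetric]
      using K0 by (simp add: field_simps)
    finally show ?thesis unfolding gz K0_def .
  qed
qed

lemma xE_int:
  fixes a b c :: real
  assumes a: "a > -1" and b: "b > -1" and c: "\<bar>c\<bar> < 1"
  shows "set_integrable lborel {\<bar>c\<bar>..1} (\<lambda>x. x * ((1 - x^2) powr ((a - 1) / 2) * (x^2 - c^2) powr ((b - 1) / 2)))"
proof -
  define K0 where "K0 = 1 - c^2"
  have K0: "K0 > 0" using c abs_square_less_1[of c] by (simp add: K0_def)
  define \<mu> where "\<mu> = muA a"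
  define \<nu> where "\<nu> = muA b"
  have mu: "\<mu> > 0" and nu: "\<nu> > 0" using a b by (auto simp: \<mu>_def \<nu>_def muA_def field_simps)
  define \<phi> where "\<phi> t = wt \<mu> \<nu> (1 - t)" for t
  have phi: "set_integrable lborel {0..1} \<phi>"
    unfolding \<phi>_def using refl01(1)[of "wt \<mu> \<nu>"] beta_lborel(1)[OF mu nu] by simp
  define C where "C = K0 / 2 * (K0 powr (\<mu> - 1) * K0 powr (\<nu> - 1))"
  have I: "set_integrable lborel {\<bar>c\<bar>..1} (\<lambda>x. C * (\<phi> ((x^2 - c^2) / (1 - c^2)) * (2 * x / (1 - c^2))))"
    by (rule set_integrable_mult_right[OF subst01(1)[OF c phi]])
  have am: "(a - 1) / 2 = \<mu> - 1" "(b - 1) / 2 = \<nu> - 1" by (simp_all add: \<mu>_def \<nu>_def muA_def field_simps)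
  have eq: "x * ((1 - x^2) powr ((a - 1) / 2) * (x^2 - c^2) powr ((b - 1) / 2)) = C * (\<phi> ((x^2 - c^2) / (1 - c^2)) * (2 * x / (1 - c^2)))"
    if x: "x \<in> {\<bar>c\<bar>..1}" for x
  proof -
    have gz: "1 - (x^2 - c^2) / K0 = (1 - x^2) / K0" using K0 by (simp add: K0_def field_simps)
    have "x * ((1 - x^2) powr ((a - 1) / 2) * (x^2 - c^2) powr ((b - 1) / 2)) = x * (K0 powr (\<mu> - 1) * K0 powr (\<nu> - 1) * wt \<mu> \<nu> ((1 - x^2) / K0))"
      unfolding am E_wt[OF c x] K0_def by simp
    also have "\<dots> = C * (\<phi> ((x^2 - c^2) / K0) * (2 * x / K0))"
      unfolding \<phi>_def gz C_def using K0 by (simp add: field_simps)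
    finally show ?thesis unfolding K0_def .
  qed
  show ?thesis using I by (subst set_integrable_cong[OF refl refl eq]) auto
qed

lemma G_int:
  fixes a b c :: real
  assumes a: "a > -1" and b: "b > -1" and c: "\<bar>c\<bar> < 1"
  shows "set_integrable lborel {\<bar>c\<bar>..1} (\<lambda>x. Jr n a b c x * Jr m a b c x * w1 a b c x)"
    and "set_integrable lborel {\<bar>c\<bar>..1} (\<lambda>x. Jr n a b c (-x) * Jr m a b c (-x) * w1 a b c (-x))"
proof -
  obtain Mn where Mn: "Mn \<ge> 0" "\<And>y. y \<in> {-1..1} \<Longrightarrow> \<bar>Jr n a b c y\<bar> \<le> Mn" using Jr_bound[OF c] by blast
  obtain Mm where Mm: "Mm \<ge> 0" "\<And>y. y \<in> {-1..1} \<Longrightarrow> \<bar>Jr m a b c y\<bar> \<le> Mm" using Jr_bound[OF c] by blast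
  define E where "E x = (1 - x^2) powr ((a - 1) / 2) * (x^2 - c^2) powr ((b - 1) / 2)" for x
  have Eneg: "E (-x) = E x" for x by (simp add: E_def)
  have E0: "E x \<ge> 0" for x by (simp add: E_def)
  have F: "set_integrable lborel {\<bar>c\<bar>..1} (\<lambda>x. (4 * Mn * Mm) * (x * E x))"
    using xE_int[OF a b c] unfolding E_def by simp
  have [measurable]: "Jr n a b c \<in> borel_measurable borel" "Jr m a b c \<in> borel_measurable borel"
    using Jr_meas[OF c] by auto
  have [measurable]: "w1 a b c \<in> borel_measurable borel" by (rule w1_meas)
  have w1abs: "\<bar>w1 a b c x\<bar> \<le> 4 * (x * E x)" "\<bar>w1 a b c (-x)\<bar> \<le> 4 * (x * E x)" if x: "x \<in> {\<bar>c\<bar>..1}" for x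
  proof -
    have x0: "x \<ge> 0" using x by auto
    have s: "\<bar>sgn x\<bar> \<le> 1" "\<bar>sgn (-x)\<bar> \<le> 1" by (auto simp: sgn_real_def)
    have p: "\<bar>1 + x\<bar> \<le> 2" "\<bar>1 - x\<bar> \<le> 2" using x by auto
    have q: "\<bar>x - c\<bar> \<le> 2 * x" "\<bar>-x - c\<bar> \<le> 2 * x" using x by auto
    have w1e: "w1 a b c y = sgn y * (1 + y) * (y - c) * E y" for y by (simp add: w1_def E_def mult.assoc)
    have "\<bar>w1 a b c x\<bar> = \<bar>sgn x\<bar> * \<bar>1 + x\<bar> * \<bar>x - c\<bar> * E x" using E0 by (simp add: w1e abs_mult)
    also have "\<dots> \<le> 1 * 2 * (2 * x) * E x"
      using s p q E0 by (intro mult_mono) auto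
    finally show "\<bar>w1 a b c x\<bar> \<le> 4 * (x * E x)" by simp
    have "\<bar>w1 a b c (-x)\<bar> = \<bar>sgn (-x)\<bar> * \<bar>1 - x\<bar> * \<bar>-x - c\<bar> * E x" using E0 by (simp add: w1e abs_mult Eneg)
    also have "\<dots> \<le> 1 * 2 * (2 * x) * E x"
      using s p q E0 by (intro mult_mono) auto
    finally show "\<bar>w1 a b c (-x)\<bar> \<le> 4 * (x * E x)" by simp
  qed
  have bnd: "\<bar>Jr n a b c y * Jr m a b c y * w1 a b c y\<bar> \<le> 4 * Mn * Mm * (x * E x)"
    if x: "x \<in> {\<bar>c\<bar>..1}" and y: "y = x \<or> y = -x" for x y
  proof -
    have yr: "y \<in> {-1..1}" "x \<ge> 0" using x y c by auto
    have "\<bar>w1 a b c y\<bar> \<le> 4 * (x * E x)" using w1abs[OF x] y by auto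
    then have "\<bar>Jr n a b c y\<bar> * \<bar>Jr m a b c y\<bar> * \<bar>w1 a b c y\<bar> \<le> Mn * Mm * (4 * (x * E x))"
      using Mn Mm yr by (intro mult_mono) auto
    then show ?thesis by (simp add: abs_mult mult_ac)
  qed
  have nF: "norm ((4 * Mn * Mm) * (x * E x)) = (4 * Mn * Mm) * (x * E x)" if "x \<in> {\<bar>c\<bar>..1}" for x
  proof -
    have "x \<ge> 0" using that by auto
    then show ?thesis using Mn Mm E0 by (simp add: abs_mult)
  qed
  show "set_integrable lborel {\<bar>c\<bar>..1} (\<lambda>x. Jr n a b c x * Jr m a b c x * w1 a b c x)"
  proof (rule set_integrable_bound[OF F])
    show "set_borel_measurable lborel {\<bar>c\<bar>..1} (\<lambda>x. Jr n a b c x * Jr m a b c x * w1 a b c x)"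
      unfolding set_borel_measurable_def by measurable
    show "AE x in lborel. x \<in> {\<bar>c\<bar>..1} \<longrightarrow> norm (Jr n a b c x * Jr m a b c x * w1 a b c x) \<le> norm (4 * Mn * Mm * (x * E x))"
      using bnd nF by auto
  qed
  show "set_integrable lborel {\<bar>c\<bar>..1} (\<lambda>x. Jr n a b c (-x) * Jr m a b c (-x) * w1 a b c (-x))"
  proof (rule set_integrable_bound[OF F])
    show "set_borel_measurable lborel {\<bar>c\<bar>..1} (\<lambda>x. Jr n a b c (-x) * Jr m a b c (-x) * w1 a b c (-x))"
      unfolding set_borel_measurable_def by measurable
    show "AE x in lborel. x \<in> {\<bar>c\<bar>..1} \<longrightarrow> norm (Jr n a b c (-x) * Jr m a b c (-x) * w1 a b c (-x)) \<le> norm (4 * Mn * Mm * (x * E x))"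
      using bnd nF by auto
  qed
qed

lemma Hf_int:
  fixes a b :: real
  assumes a: "a > -1" and b: "b > -1"
  shows "set_integrable lborel {0..1} (Hf n m a b)" "(LINT z:{0..1}|lborel. Hf n m a b z) = Xv n m a b"
proof -
  have mu: "muA a > 0" "muA a + 1 > 0" and nu: "muA b > 0" "muA b + 1 > 0"
    using a b by (auto simp: muA_def field_simps)
  note I1 = Lf_main(1)[OF mu(1) nu(1), of "Rp n a b * Rp m a b"]
  note I2 = Lf_main(1)[OF mu(2) nu(2), of "Qp n a b * Qp m a b"]
  show "set_integrable lborel {0..1} (Hf n m a b)"
    unfolding Hf_def using set_integral_add(1)[OF I1 I2] .
  show "(LINT z:{0..1}|lborel. Hf n m a b z) = Xv n m a b"
    unfolding Hf_def Xv_def Lf_def using set_integral_add(2)[OF I1 I2] .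
qed

theorem T1:
  fixes a b c :: real
  assumes a: "a > -1" and b: "b > -1" and c: "\<bar>c\<bar> < 1"
  shows "(LINT x : {-1..-\<bar>c\<bar>} \<union> {\<bar>c\<bar>..1} | lborel. bigJ n x a b c * bigJ m x a b c * w1 a b c x)
       = (if n = m then (1 - c^2) powr ((a + b + 2) / 2) / (1 + c) * hnorm n a b else 0)"
proof -
  define K0 where "K0 = 1 - c^2"
  have K0: "K0 > 0" using c abs_square_less_1[of c] by (simp add: K0_def)
  have c1: "1 + c \<noteq> 0" using c by auto
  define G where "G x = Jr n a b c x * Jr m a b c x * w1 a b c x" for x
  have eqf: "(\<lambda>x. bigJ n x a b c * bigJ m x a b c * w1 a b c x) = G"
    by (simp add: G_def fun_eq_iff bigJ_Jr[OF a c1])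
  have IB: "set_integrable lborel {\<bar>c\<bar>..1} G" unfolding G_def by (rule G_int(1)[OF a b c])
  have IBm: "set_integrable lborel {\<bar>c\<bar>..1} (\<lambda>x. G (0 - x))" unfolding G_def using G_int(2)[OF a b c] by simp
  have IA: "set_integrable lborel {-1..-\<bar>c\<bar>} G" using IBm refl_gen(1)[of "\<bar>c\<bar>" 1 G 0] by simp
  have AE0: "AE x in lborel. \<not> (x \<in> {-1..-\<bar>c\<bar>} \<and> x \<in> {\<bar>c\<bar>..1})"
    using AE_lborel_singleton[of "0::real"] by eventually_elim auto
  have "(LINT x : {-1..-\<bar>c\<bar>} \<union> {\<bar>c\<bar>..1} | lborel. G x)
       = (LINT x : {-1..-\<bar>c\<bar>} | lborel. G x) + (LINT x : {\<bar>c\<bar>..1} | lborel. G x)"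
    by (rule set_integral_Un_AE[OF AE0 _ _ IA IB]) auto
  also have "(LINT x : {-1..-\<bar>c\<bar>} | lborel. G x) = (LINT x : {\<bar>c\<bar>..1} | lborel. G (0 - x))"
    using refl_gen(2)[of "\<bar>c\<bar>" 1 G 0] by simp
  also have "(LINT x : {\<bar>c\<bar>..1} | lborel. G (0 - x)) + (LINT x : {\<bar>c\<bar>..1} | lborel. G x)
       = (LINT x : {\<bar>c\<bar>..1} | lborel. G x + G (0 - x))"
    using set_integral_add(2)[OF IB IBm] by simp
  also have "\<dots> = (LINT x : {\<bar>c\<bar>..1} | lborel. Kc a b c * ((\<lambda>t. Hf n m a b (1 - t)) ((x^2 - c^2) / (1 - c^2)) * (2 * x / (1 - c^2))))"
  proof (rule set_lebesgue_integral_cong)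
    show "\<forall>x. x \<in> {\<bar>c\<bar>..1} \<longrightarrow> G x + G (0 - x) = Kc a b c * ((\<lambda>t. Hf n m a b (1 - t)) ((x^2 - c^2) / (1 - c^2)) * (2 * x / (1 - c^2)))"
    proof (intro allI impI)
      fix x assume x: "x \<in> {\<bar>c\<bar>..1}"
      show "G x + G (0 - x) = Kc a b c * ((\<lambda>t. Hf n m a b (1 - t)) ((x^2 - c^2) / (1 - c^2)) * (2 * x / (1 - c^2)))"
        using sym_point[OF a b c x, of n m] unfolding G_def by simp
    qed
  qed simp
  also have "\<dots> = Kc a b c * (LINT x : {\<bar>c\<bar>..1} | lborel. (\<lambda>t. Hf n m a b (1 - t)) ((x^2 - c^2) / (1 - c^2)) * (2 * x / (1 - c^2)))"
    by simp
  also have "\<dots> = Kc a b c * (LINT t : {0..1} | lborel. Hf n m a b (1 - t))"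
  proof -
    have "set_integrable lborel {0..1} (\<lambda>t. Hf n m a b (1 - t))"
      using refl01(1)[of "Hf n m a b"] Hf_int(1)[OF a b] by simp
    from subst01(2)[OF c this] show ?thesis by (simp only:)
  qed
  also have "\<dots> = Kc a b c * Xv n m a b"
    using refl01(2)[of "Hf n m a b"] Hf_int(2)[OF a b] by simp
  also have "\<dots> = (if n = m then (1 - c^2) powr ((a + b + 2) / 2) / (1 + c) * hnorm n a b else 0)"
  proof -
    have e: "muA a + muA b - 1 = (a + b) / 2" by (simp add: muA_def field_simps)
    have "(1 - c^2) powr ((a + b + 2) / 2) = K0 powr ((a + b) / 2) * K0"
    proof -
      have "K0 powr ((a + b) / 2) * K0 powr 1 = K0 powr ((a + b) / 2 + 1)" by (simp only: powr_add)
      moreover have "(a + b) / 2 + 1 = (a + b + 2) / 2" by (simp add: field_simps)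
      moreover have "K0 powr 1 = K0" using K0 by simp
      ultimately show ?thesis by (simp add: K0_def)
    qed
    then have "(1 - c^2) powr ((a + b + 2) / 2) / (1 + c) = K0 powr ((a + b) / 2) * (K0 / (1 + c))"
      by simp
    moreover have "K0 / (1 + c) = 1 - c" using c1 by (simp add: K0_def field_simps power2_eq_square)
    ultimately have "(1 - c^2) powr ((a + b + 2) / 2) / (1 + c) = Kc a b c"
      unfolding Kc_def e K0_def[symmetric] by (simp add: mult.commute)
    then show ?thesis using Xv_val[OF a b] by simp
  qed
  finally show ?thesis unfolding eqf .
qed



lemma pw_nat: "(Y::real) > 0 \<Longrightarrow> Y ^ n = Y powr real n"
  by (simp add: powr_realpow)

lemma pw_quot: "(Y::real) > 0 \<Longrightarrow> Q > 0 \<Longrightarrow> (Q / Y^2) powr p = Q powr p / Y powr (2 * p)"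
proof -
  assume Y: "Y > 0" and Q: "Q > 0"
  have "Y^2 = Y powr 2" using Y by (simp add: powr_realpow)
  then have "(Y^2) powr p = Y powr (2 * p)" by (simp add: powr_powr)
  then show ?thesis by (simp add: powr_divide)
qed

lemma collapse_even:
  fixes Y Q s :: real
  assumes Y: "Y > 0" and Q: "Q > 0"
  shows "Y * Y^(2*k) * (Q / Y^2)^k * Y powr s * (Q / Y^2) powr ((s + 2) / 2) = Q powr ((2 * real k + s) / 2) * Q / Y"
proof -
  have y2k: "Y^(2*k) = Y powr (2 * real k)" using powr_realpow[OF Y, of "2*k"] by simp
  have qk: "(Q / Y^2)^k = (Q / Y^2) powr real k" using Y Q by (simp add: powr_realpow)
  have h1: "Y powr (2 * ((s + 2) / 2)) = Y powr s * Y^2"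
  proof -
    have "Y powr (2 * ((s + 2) / 2)) = Y powr (s + 2)" by (rule arg_cong[where f="\<lambda>e. Y powr e"]) simp
    also have "\<dots> = Y powr s * Y powr 2" by (rule powr_add)
    also have "Y powr 2 = Y^2" using Y by (simp add: powr_realpow)
    finally show ?thesis .
  qed
  have h2: "Q powr ((s + 2) / 2) = Q powr (s / 2) * Q"
  proof -
    have "Q powr ((s + 2) / 2) = Q powr (s / 2 + 1)" by (simp add: add_divide_distrib)
    also have "\<dots> = Q powr (s / 2) * Q powr 1" by (rule powr_add)
    finally show ?thesis using Q by simp
  qed
  have h3: "Q powr (real (2 * k) / 2 + s / 2) = Q powr real k * Q powr (s / 2)"
    by (simp add: powr_add)
  have h3': "Q powr ((2 * real k + s) / 2) = Q powr real k * Q powr (s / 2)"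
    using h3 by (simp add: add_divide_distrib)
  have h4: "Y powr (2 * real k) = Y ^ (2 * k)" using y2k by simp
  have nz: "Y powr (2 * real k) \<noteq> 0" "Y powr s \<noteq> 0" "Y \<noteq> 0" using Y by auto
  show ?thesis unfolding y2k qk pw_quot[OF Y Q] h1 h2 h3' using nz by (simp add: field_simps power2_eq_square)
qed

lemma collapse_odd:
  fixes Y Q s :: real
  assumes Y: "Y > 0" and Q: "Q > 0" and k: "k \<ge> 1"
  shows "Y * Y^(2*k) * (Q / Y^2)^(k-1) * Y powr s * (Q / Y^2) powr ((s + 2) / 2) = Q powr ((2 * real k + s) / 2) * Y"
proof -
  have y2k: "Y^(2*k) = Y powr (2 * real k)" using powr_realpow[OF Y, of "2*k"] by simp
  have qk: "(Q / Y^2)^(k-1) = (Q / Y^2) powr real (k-1)" using Y Q by (simp add: powr_realpow)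
  have rk: "real (k - 1) = real k - 1" using k by (simp add: of_nat_diff)
  have h1: "Y powr (2 * ((s + 2) / 2)) = Y powr s * Y^2"
  proof -
    have "Y powr (2 * ((s + 2) / 2)) = Y powr (s + 2)" by (rule arg_cong[where f="\<lambda>e. Y powr e"]) simp
    also have "\<dots> = Y powr s * Y powr 2" by (rule powr_add)
    also have "Y powr 2 = Y^2" using Y by (simp add: powr_realpow)
    finally show ?thesis .
  qed
  have h2: "Q powr ((s + 2) / 2) = Q powr (s / 2) * Q"
  proof -
    have "Q powr ((s + 2) / 2) = Q powr (s / 2 + 1)" by (simp add: add_divide_distrib)
    also have "\<dots> = Q powr (s / 2) * Q powr 1" by (rule powr_add)
    finally show ?thesis using Q by simp
  qed
  have h3': "Q powr ((2 * real k + s) / 2) = Q powr real k * Q powr (s / 2)"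
  proof -
    have "Q powr ((2 * real k + s) / 2) = Q powr (real k + s / 2)" by (simp add: add_divide_distrib)
    then show ?thesis by (simp add: powr_add)
  qed
  have h5: "Q powr (real k - 1) = Q powr real k / Q"
    using Q by (simp add: powr_diff)
  have h6: "Y powr (2 * (real k - 1)) = Y powr (2 * real k) / Y^2"
  proof -
    have "Y powr (2 * (real k - 1)) = Y powr (2 * real k - 2)" by (simp add: algebra_simps)
    also have "\<dots> = Y powr (2 * real k) / Y powr 2" by (rule powr_diff)
    finally show ?thesis using Y by (simp add: powr_realpow)
  qed
  have nz: "Y powr (2 * real k) \<noteq> 0" "Y powr s \<noteq> 0" "Y \<noteq> 0" "Q \<noteq> 0" using Y Q by auto
  show ?thesis unfolding y2k qk pw_quot[OF Y Q] rk h1 h2 h3' h5 h6 using nz by (simp add: field_simps power2_eq_square)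
qed

lemma domX_iff: "x \<in> domX \<delta> y \<longleftrightarrow> \<bar>\<delta>\<bar> \<le> \<bar>x\<bar> \<and> \<bar>x\<bar> \<le> \<bar>y\<bar>"
  unfolding domX_def by auto

lemma D1_iff: "u \<in> {-1..-\<bar>c\<bar>} \<union> {\<bar>c\<bar>..1} \<longleftrightarrow> \<bar>c\<bar> \<le> \<bar>u\<bar> \<and> \<bar>u\<bar> \<le> (1::real)"
  by auto

lemma domX_scale:
  assumes y: "y \<noteq> 0"
  shows "y * u \<in> domX \<delta> y \<longleftrightarrow> u \<in> {-1..-\<bar>\<delta> / y\<bar>} \<union> {\<bar>\<delta> / y\<bar>..1}"
proof -
  have Y: "\<bar>y\<bar> > 0" using y by simp
  have "\<bar>\<delta>\<bar> \<le> \<bar>y\<bar> * \<bar>u\<bar> \<longleftrightarrow> \<bar>\<delta>\<bar> / \<bar>y\<bar> \<le> \<bar>u\<bar>" using Y by (simp add: field_simps)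
  moreover have "\<bar>y\<bar> * \<bar>u\<bar> \<le> \<bar>y\<bar> \<longleftrightarrow> \<bar>u\<bar> \<le> 1" using Y by simp
  ultimately show ?thesis unfolding domX_iff D1_iff by (simp add: abs_mult abs_divide)
qed

definition W0 :: "real \<Rightarrow> real \<Rightarrow> real \<Rightarrow> real \<Rightarrow> real" where
  "W0 \<alpha> \<beta> \<gamma> y = \<bar>y\<bar> powr (\<beta> + \<gamma>) * (1 + y) * (1 - y^2) powr ((\<alpha> - 1) / 2)"

lemma weight_scale:
  assumes y: "y \<noteq> 0"
  shows "weightW \<alpha> \<beta> \<gamma> \<delta> (y * u) y = W0 \<alpha> \<beta> \<gamma> y * w1 \<gamma> \<beta> (\<delta> / y) u"
proof -
  have s: "sgn (y * u * y) = sgn u" using y by (simp add: sgn_mult)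
  have e1: "y * u / y = u" using y by simp
  have e2: "(y * u - \<delta>) / y = u - \<delta> / y" using y by (simp add: field_simps)
  have e3: "(y * u)^2 / y^2 = u^2" using y by (simp add: power_mult_distrib)
  have e4: "((y * u)^2 - \<delta>^2) / y^2 = u^2 - (\<delta> / y)^2" using y by (simp add: field_simps power_mult_distrib)
  show ?thesis unfolding weightW_def W0_def w1_def s e1 e2 e3 e4 by (simp add: mult_ac)
qed

lemma bigJ2_scale:
  assumes y: "y \<noteq> 0"
  shows "bigJ2 \<alpha> \<beta> \<gamma> \<delta> n k (y * u) y
       = bigJ (n - k) y \<alpha> (2 * real k + \<beta> + \<gamma> + 1) ((-1)^k * \<delta>) * rho \<delta> k y * bigJ k u \<gamma> \<beta> (\<delta> / y)"
  unfolding bigJ2_def using y by simp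

definition innerI :: "real \<Rightarrow> real \<Rightarrow> real \<Rightarrow> real \<Rightarrow> nat \<Rightarrow> nat \<Rightarrow> nat \<Rightarrow> nat \<Rightarrow> real \<Rightarrow> real" where
  "innerI \<alpha> \<beta> \<gamma> \<delta> n k m l y = (LINT x : domX \<delta> y | lborel.
               bigJ2 \<alpha> \<beta> \<gamma> \<delta> n k x y * bigJ2 \<alpha> \<beta> \<gamma> \<delta> m l x y * weightW \<alpha> \<beta> \<gamma> \<delta> x y)"

lemma inner_generic:
  assumes y: "y \<noteq> 0"
  shows "innerI \<alpha> \<beta> \<gamma> \<delta> n k m l y
     = \<bar>y\<bar> * (bigJ (n - k) y \<alpha> (2 * real k + \<beta> + \<gamma> + 1) ((-1)^k * \<delta>) * rho \<delta> k y
              * (bigJ (m - l) y \<alpha> (2 * real l + \<beta> + \<gamma> + 1) ((-1)^l * \<delta>) * rho \<delta> l y) * W0 \<alpha> \<beta> \<gamma> y)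
       * (LINT u : {-1..-\<bar>\<delta> / y\<bar>} \<union> {\<bar>\<delta> / y\<bar>..1} | lborel. bigJ k u \<gamma> \<beta> (\<delta> / y) * bigJ l u \<gamma> \<beta> (\<delta> / y) * w1 \<gamma> \<beta> (\<delta> / y) u)"
proof -
  define F where "F x = bigJ2 \<alpha> \<beta> \<gamma> \<delta> n k x y * bigJ2 \<alpha> \<beta> \<gamma> \<delta> m l x y * weightW \<alpha> \<beta> \<gamma> \<delta> x y" for x
  define C where "C = bigJ (n - k) y \<alpha> (2 * real k + \<beta> + \<gamma> + 1) ((-1)^k * \<delta>) * rho \<delta> k y
              * (bigJ (m - l) y \<alpha> (2 * real l + \<beta> + \<gamma> + 1) ((-1)^l * \<delta>) * rho \<delta> l y) * W0 \<alpha> \<beta> \<gamma> y"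
  define D where "D = {-1..-\<bar>\<delta> / y\<bar>} \<union> {\<bar>\<delta> / y\<bar>..(1::real)}"
  define g where "g u = bigJ k u \<gamma> \<beta> (\<delta> / y) * bigJ l u \<gamma> \<beta> (\<delta> / y) * w1 \<gamma> \<beta> (\<delta> / y) u" for u
  have fe: "(\<lambda>u. indicator (domX \<delta> y) (0 + y * u) *\<^sub>R F (0 + y * u)) = (\<lambda>u. C * (indicator D u *\<^sub>R g u))"
  proof
    fix u
    have "F (y * u) = C * g u"
      unfolding F_def C_def g_def bigJ2_scale[OF y] weight_scale[OF y] by (simp add: mult_ac)
    then show "indicator (domX \<delta> y) (0 + y * u) *\<^sub>R F (0 + y * u) = C * (indicator D u *\<^sub>R g u)"
      using domX_scale[OF y, of u \<delta>] by (simp add: D_def indicator_def)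
  qed
  have "innerI \<alpha> \<beta> \<gamma> \<delta> n k m l y = (\<integral>x. indicator (domX \<delta> y) x *\<^sub>R F x \<partial>lborel)"
    unfolding innerI_def set_lebesgue_integral_def F_def ..
  also have "\<dots> = \<bar>y\<bar> *\<^sub>R (\<integral>u. indicator (domX \<delta> y) (0 + y * u) *\<^sub>R F (0 + y * u) \<partial>lborel)"
    by (rule lborel_integral_real_affine[OF y])
  also have "\<dots> = \<bar>y\<bar> * (C * (LINT u : D | lborel. g u))"
    unfolding fe set_lebesgue_integral_def by simp
  finally show ?thesis unfolding C_def D_def g_def by (simp add: mult.assoc)
qed

lemma rho_collapse:
  fixes \<alpha> \<beta> \<gamma> \<delta> y :: real
  assumes y: "y \<noteq> 0" and yd: "\<bar>\<delta>\<bar> < \<bar>y\<bar>"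
  shows "\<bar>y\<bar> * (rho \<delta> k y * rho \<delta> k y) * W0 \<alpha> \<beta> \<gamma> y * ((1 - (\<delta> / y)^2) powr ((\<gamma> + \<beta> + 2) / 2) / (1 + \<delta> / y))
       = w1 \<alpha> (2 * real k + \<beta> + \<gamma> + 1) ((-1)^k * \<delta>) y"
proof -
  define Y where "Y = \<bar>y\<bar>"
  define Q where "Q = y^2 - \<delta>^2"
  define s where "s = \<beta> + \<gamma>"
  have Y: "Y > 0" using y by (simp add: Y_def)
  have Q: "Q > 0" using yd abs_le_square_iff[of y \<delta>] by (simp add: Q_def)
  have yY: "y^2 = Y^2" by (simp add: Y_def)
  have q1: "1 - \<delta>^2 / y^2 = Q / Y^2" using y by (simp add: Q_def Y_def field_simps)
  have q2: "1 - (\<delta> / y)^2 = Q / Y^2" using q1 by (simp add: power_divide)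
  have yd0: "y + \<delta> \<noteq> 0" using yd by auto
  have ypd: "1 + \<delta> / y = (y + \<delta>) / y" using y by (simp add: field_simps)
  have sg: "sgn y = y / Y" using y by (simp add: Y_def sgn_real_def)
  have Yy: "Y / y = y / Y" using y by (simp add: Y_def field_simps abs_if)
  have ex: "(2 * real k + \<beta> + \<gamma> + 1 - 1) / 2 = (2 * real k + s) / 2" by (simp add: s_def)
  have gb: "(\<gamma> + \<beta> + 2) / 2 = (s + 2) / 2" by (simp add: s_def)
  have W0e: "W0 \<alpha> \<beta> \<gamma> y = Y powr s * ((1 + y) * (1 - y^2) powr ((\<alpha> - 1) / 2))"
    by (simp add: W0_def Y_def s_def mult_ac)
  define R where "R = (1 + y) * (1 - y^2) powr ((\<alpha> - 1) / 2)"
  have y2k: "y^(2*k) = Y^(2*k)" by (simp add: Y_def power_mult power_even_abs)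
  show ?thesis
  proof (cases "even k")
    case True
    have rr: "rho \<delta> k y * rho \<delta> k y = Y^(2*k) * (Q / Y^2)^k"
    proof -
      have "rho \<delta> k y * rho \<delta> k y = (y^k * y^k) * ((Q / Y^2)^(k div 2) * (Q / Y^2)^(k div 2))"
        using True unfolding rho_def q1 by (simp add: mult_ac)
      also have "y^k * y^k = y^(2*k)" by (simp add: power_add[symmetric] mult_2)
      also have "(Q / Y^2)^(k div 2) * (Q / Y^2)^(k div 2) = (Q / Y^2)^k"
      proof -
        have "k div 2 + k div 2 = k" using True by presburger
        then show ?thesis by (simp add: power_add[symmetric])
      qed
      finally show ?thesis unfolding y2k .
    qed
    have sgnk: "(-1::real)^k = 1" using True by simp
    have "\<bar>y\<bar> * (rho \<delta> k y * rho \<delta> k y) * W0 \<alpha> \<beta> \<gamma> y * ((1 - (\<delta> / y)^2) powr ((\<gamma> + \<beta> + 2) / 2) / (1 + \<delta> / y))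
        = R / (1 + \<delta> / y) * (Y * Y^(2*k) * (Q / Y^2)^k * Y powr s * (Q / Y^2) powr ((s + 2) / 2))"
      unfolding rr W0e q2 gb Y_def[symmetric] R_def by (simp add: mult_ac)
    also have "\<dots> = R / (1 + \<delta> / y) * (Q powr ((2 * real k + s) / 2) * Q / Y)"
      unfolding collapse_even[OF Y Q] ..
    also have "\<dots> = sgn y * (y - \<delta>) * R * Q powr ((2 * real k + s) / 2)"
    proof -
      obtain T where T: "y + \<delta> = T" by blast
      have T0: "T \<noteq> 0" using yd0 T by simp
      have Qe: "Q = (y - \<delta>) * T" using T[symmetric] by (simp add: Q_def power2_eq_square algebra_simps)
      define P where "P = Q powr ((2 * real k + s) / 2)"
      have "R / ((y + \<delta>) / y) * (P * Q / Y) = y / Y * (y - \<delta>) * R * P"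
        unfolding T Qe using y T0 Y by (simp add: field_simps)
      then show ?thesis unfolding ypd sg P_def .
    qed
    also have "\<dots> = w1 \<alpha> (2 * real k + \<beta> + \<gamma> + 1) ((-1)^k * \<delta>) y"
      unfolding w1_def sgnk ex R_def Q_def by (simp add: mult_ac)
    finally show ?thesis .
  next
    case False
    then have k1: "k \<ge> 1" by (cases k) auto
    have rr: "rho \<delta> k y * rho \<delta> k y = Y^(2*k) * (Q / Y^2)^(k-1) * (1 + \<delta> / y)^2"
    proof -
      have "rho \<delta> k y * rho \<delta> k y = (y^k * y^k) * ((Q / Y^2)^((k - 1) div 2) * (Q / Y^2)^((k - 1) div 2)) * ((1 + \<delta> / y) * (1 + \<delta> / y))"
        using False unfolding rho_def q1 by (simp add: mult_ac)
      also have "y^k * y^k = y^(2*k)" by (simp add: power_add[symmetric] mult_2)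
      also have "(1 + \<delta> / y) * (1 + \<delta> / y) = (1 + \<delta> / y)^2" by (simp add: power2_eq_square)
      also have "(Q / Y^2)^((k - 1) div 2) * (Q / Y^2)^((k - 1) div 2) = (Q / Y^2)^(k-1)"
      proof -
        have "(k - 1) div 2 + (k - 1) div 2 = k - 1" using False by presburger
        then show ?thesis by (simp add: power_add[symmetric])
      qed
      finally show ?thesis unfolding y2k .
    qed
    have sgnk: "(-1::real)^k = -1" using False by simp
    have "\<bar>y\<bar> * (rho \<delta> k y * rho \<delta> k y) * W0 \<alpha> \<beta> \<gamma> y * ((1 - (\<delta> / y)^2) powr ((\<gamma> + \<beta> + 2) / 2) / (1 + \<delta> / y))
        = R * ((1 + \<delta> / y)^2 / (1 + \<delta> / y)) * (Y * Y^(2*k) * (Q / Y^2)^(k-1) * Y powr s * (Q / Y^2) powr ((s + 2) / 2))"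
      unfolding rr W0e q2 gb Y_def[symmetric] R_def by (simp add: mult_ac)
    also have "\<dots> = R * ((1 + \<delta> / y)^2 / (1 + \<delta> / y)) * (Q powr ((2 * real k + s) / 2) * Y)"
      unfolding collapse_odd[OF Y Q k1] ..
    also have "\<dots> = sgn y * (y + \<delta>) * R * Q powr ((2 * real k + s) / 2)"
    proof -
      have "1 + \<delta> / y \<noteq> 0" unfolding ypd using y yd0 by simp
      then have "(1 + \<delta> / y)^2 / (1 + \<delta> / y) = 1 + \<delta> / y" by (simp add: power2_eq_square)
      moreover have "(1 + \<delta> / y) * Y = sgn y * (y + \<delta>)"
      proof -
        have "(1 + \<delta> / y) * Y = (y + \<delta>) * (Y / y)" unfolding ypd by simp
        also have "\<dots> = (y + \<delta>) * (y / Y)" unfolding Yy ..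
        finally show ?thesis unfolding sg by simp
      qed
      ultimately show ?thesis by (simp add: mult_ac)
    qed
    also have "\<dots> = w1 \<alpha> (2 * real k + \<beta> + \<gamma> + 1) ((-1)^k * \<delta>) y"
      unfolding w1_def sgnk ex R_def Q_def by (simp add: mult_ac)
    finally show ?thesis .
  qed
qed

lemma int_two_points: "(LINT x : {p, q} | lborel. (f x :: real)) = 0"
  unfolding set_lebesgue_integral_def
  by (rule integral_eq_zero_AE)
     (use AE_lborel_singleton[of p] AE_lborel_singleton[of q] in \<open>eventually_elim, auto simp: indicator_def\<close>)

lemma inner_val:
  fixes \<alpha> \<beta> \<gamma> \<delta> y :: real
  assumes al: "\<alpha> > -1" and be: "\<beta> > -1" and ga: "\<gamma> > -1" and de: "\<bar>\<delta>\<bar> < 1"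
    and y: "y \<in> domY \<delta>"
  shows "innerI \<alpha> \<beta> \<gamma> \<delta> n k m l y
       = (if k = l then hnorm k \<gamma> \<beta> * (bigJ (n - k) y \<alpha> (2 * real k + \<beta> + \<gamma> + 1) ((-1)^k * \<delta>)
              * bigJ (m - k) y \<alpha> (2 * real k + \<beta> + \<gamma> + 1) ((-1)^k * \<delta>)
              * w1 \<alpha> (2 * real k + \<beta> + \<gamma> + 1) ((-1)^k * \<delta>) y) else 0)"
proof -
  have yr: "\<bar>\<delta>\<bar> \<le> \<bar>y\<bar>" "\<bar>y\<bar> \<le> 1" using y unfolding domY_def by auto
  show ?thesis
  proof (cases "y \<noteq> 0 \<and> \<bar>\<delta>\<bar> < \<bar>y\<bar>")
    case True
    then have y0: "y \<noteq> 0" and yd: "\<bar>\<delta>\<bar> < \<bar>y\<bar>" by auto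
    have c: "\<bar>\<delta> / y\<bar> < 1" using yd y0 by (simp add: abs_divide field_simps)
    note T = T1[OF ga be c, of k l]
    show ?thesis
    proof (cases "k = l")
      case False
      then show ?thesis unfolding inner_generic[OF y0] T by simp
    next
      case kl: True
      have "innerI \<alpha> \<beta> \<gamma> \<delta> n k m l y
          = hnorm k \<gamma> \<beta> * (bigJ (n - k) y \<alpha> (2 * real k + \<beta> + \<gamma> + 1) ((-1)^k * \<delta>)
              * bigJ (m - k) y \<alpha> (2 * real k + \<beta> + \<gamma> + 1) ((-1)^k * \<delta>)
              * (\<bar>y\<bar> * (rho \<delta> k y * rho \<delta> k y) * W0 \<alpha> \<beta> \<gamma> y * ((1 - (\<delta> / y)^2) powr ((\<gamma> + \<beta> + 2) / 2) / (1 + \<delta> / y))))"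
        unfolding inner_generic[OF y0] T unfolding kl by (simp add: mult_ac)
      also have "\<dots> = hnorm k \<gamma> \<beta> * (bigJ (n - k) y \<alpha> (2 * real k + \<beta> + \<gamma> + 1) ((-1)^k * \<delta>)
              * bigJ (m - k) y \<alpha> (2 * real k + \<beta> + \<gamma> + 1) ((-1)^k * \<delta>)
              * w1 \<alpha> (2 * real k + \<beta> + \<gamma> + 1) ((-1)^k * \<delta>) y)"
        unfolding rho_collapse[OF y0 yd] ..
      finally show ?thesis using kl by simp
    qed
  next
    case False
    then have yd: "\<bar>y\<bar> = \<bar>\<delta>\<bar>" using yr by auto
    have dx: "domX \<delta> y = {-\<bar>\<delta>\<bar>, \<bar>\<delta>\<bar>}" unfolding domX_def yd by auto
    have "innerI \<alpha> \<beta> \<gamma> \<delta> n k m l y = 0" unfolding innerI_def dx by (rule int_two_points)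
    moreover have "w1 \<alpha> (2 * real k + \<beta> + \<gamma> + 1) ((-1)^k * \<delta>) y = 0"
    proof -
      have y2: "y^2 = \<delta>^2" by (metis power2_abs yd)
      have "((-1)^k * \<delta>)^2 = \<delta>^2" by (simp add: power_mult_distrib power_even_eq[symmetric] power_mult[symmetric])
      then have "y^2 = ((-1)^k * \<delta>)^2" using y2 by simp
      then show ?thesis by (simp add: w1_def)
    qed
    ultimately show ?thesis by (simp only: mult_zero_right if_cancel)
  qed
qed

theorem proposition2p1:
  fixes \<alpha> \<beta> \<gamma> \<delta> :: real and n k m l :: nat
  assumes "\<alpha> > -1" and "\<beta> > -1" and "\<gamma> > -1" and "\<bar>\<delta>\<bar> < 1"
    and "k \<le> n" and "l \<le> m"
  shows "(LINT y : domY \<delta> | lborel.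
            (LINT x : domX \<delta> y | lborel.
               bigJ2 \<alpha> \<beta> \<gamma> \<delta> n k x y * bigJ2 \<alpha> \<beta> \<gamma> \<delta> m l x y * weightW \<alpha> \<beta> \<gamma> \<delta> x y))
         = Hnorm \<alpha> \<beta> \<gamma> \<delta> n k * (if k = l then 1 else 0) * (if n = m then 1 else 0)"
proof -
  note al = assms(1) and be = assms(2) and ga = assms(3) and de = assms(4)
  define b' where "b' = 2 * real k + \<beta> + \<gamma> + 1"
  define c' where "c' = (-1)^k * \<delta>"
  have "(LINT y : domY \<delta> | lborel.
            (LINT x : domX \<delta> y | lborel.
               bigJ2 \<alpha> \<beta> \<gamma> \<delta> n k x y * bigJ2 \<alpha> \<beta> \<gamma> \<delta> m l x y * weightW \<alpha> \<beta> \<gamma> \<delta> x y))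
      = (LINT y : domY \<delta> | lborel. innerI \<alpha> \<beta> \<gamma> \<delta> n k m l y)"
    unfolding innerI_def ..
  also have "\<dots> = (LINT y : domY \<delta> | lborel. (if k = l then hnorm k \<gamma> \<beta> * (bigJ (n - k) y \<alpha> b' c'
              * bigJ (m - k) y \<alpha> b' c' * w1 \<alpha> b' c' y) else 0))"
    by (rule set_lebesgue_integral_cong) (auto simp: inner_val[OF al be ga de] b'_def c'_def domY_def)
  also have "\<dots> = Hnorm \<alpha> \<beta> \<gamma> \<delta> n k * (if k = l then 1 else 0) * (if n = m then 1 else 0)"
  proof (cases "k = l")
    case False then show ?thesis by simp
  next
    case kl: True
    have bp: "b' > -1" using be ga by (simp add: b'_def)
    have cabs: "\<bar>c'\<bar> = \<bar>\<delta>\<bar>" by (simp add: c'_def abs_mult)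
    have cp: "\<bar>c'\<bar> < 1" using de cabs by simp
    have dY: "domY \<delta> = {-1..-\<bar>c'\<bar>} \<union> {\<bar>c'\<bar>..1}" unfolding domY_def cabs ..
    have c2: "c'^2 = \<delta>^2" by (simp add: c'_def power_mult_distrib power_even_eq[symmetric] power_mult[symmetric])
    have nm: "(n - k = m - k) = (n = m)" using assms(5,6) kl by auto
    have "(LINT y : domY \<delta> | lborel. (if k = l then hnorm k \<gamma> \<beta> * (bigJ (n - k) y \<alpha> b' c'
              * bigJ (m - k) y \<alpha> b' c' * w1 \<alpha> b' c' y) else 0))
        = hnorm k \<gamma> \<beta> * (LINT y : {-1..-\<bar>c'\<bar>} \<union> {\<bar>c'\<bar>..1} | lborel. bigJ (n - k) y \<alpha> b' c' * bigJ (m - k) y \<alpha> b' c' * w1 \<alpha> b' c' y)"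
      unfolding dY using kl by simp
    also have "\<dots> = hnorm k \<gamma> \<beta> * (if n = m then (1 - c'^2) powr ((\<alpha> + b' + 2) / 2) / (1 + c') * hnorm (n - k) \<alpha> b' else 0)"
      unfolding T1[OF al bp cp] nm ..
    also have "\<dots> = Hnorm \<alpha> \<beta> \<gamma> \<delta> n k * (if k = l then 1 else 0) * (if n = m then 1 else 0)"
    proof -
      have e1: "(\<alpha> + b' + 2) / 2 = (2 * real k + \<alpha> + \<beta> + \<gamma> + 3) / 2" by (simp add: b'_def field_simps)
      have e2: "b' = 2 * real k + \<gamma> + \<beta> + 1" by (simp add: b'_def)
      show ?thesis unfolding Hnorm_def c2 e1 using kl by (simp add: e2 c'_def mult_ac)
    qed
    finally show ?thesis .
  qed
  finally show ?thesis .
qed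


end
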